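(* Let $p\ge1$ be a real number which is not an even integer, and let $L_p=L_p(\Omega,\mu)$ be infinite-dimensional (for some measure space). Then there is no $T^p$-smooth bump function on $L_p$.
   Context: For a real number $p\ge1$, a function $f:X\to\mathbb{R}$ on a Banach space $X$ has a Taylor expansion of order $p$ at $x\in X$ if there is a continuous polynomial $P$ on $X$ of degree at most $[p]$ with $|f(x+h)-f(x)-P(h)|=o(\|h\|^p)$ as $h\to0$; $f$ is $T^p$-smooth if it has a Taylor expansion of order $p$ at every point. A bump function is a real-valued function with bounded nonempty support. *)

theory Defs
  imports "HOL-Analysis.Analysis"
begin

text \<open>The k arguments are encoded
  as a function from nat, and A depends only on the arguments with index below k.\<close>
definition cont_homog_poly :: "nat \<Rightarrow> ('a::real_normed_vector \<Rightarrow> real) \<Rightarrow> bool" where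
  "cont_homog_poly k Q \<longleftrightarrow>
     (\<exists>A :: (nat \<Rightarrow> 'a) \<Rightarrow> real.
        (\<forall>v w. (\<forall>i<k. v i = w i) \<longrightarrow> A v = A w) \<and>
        (\<forall>v i a x y. i < k \<longrightarrow>
            A (v(i := a *\<^sub>R x + y)) = a * A (v(i := x)) + A (v(i := y))) \<and>
        (\<exists>C. \<forall>v. \<bar>A v\<bar> \<le> C * (\<Prod>i<k. norm (v i))) \<and>
        (\<forall>h. Q h = A (\<lambda>_. h)))"

definition cont_poly_deg_le :: "nat \<Rightarrow> ('a::real_normed_vector \<Rightarrow> real) \<Rightarrow> bool" where
  "cont_poly_deg_le n P \<longleftrightarrow>
     (\<exists>Q :: nat \<Rightarrow> 'a \<Rightarrow> real. (\<forall>k\<le>n. cont_homog_poly k (Q k)) \<and>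
        (\<forall>h. P h = (\<Sum>k\<le>n. Q k h)))"

definition has_taylor_exp :: "real \<Rightarrow> ('a::real_normed_vector \<Rightarrow> real) \<Rightarrow> 'a \<Rightarrow> bool" where
  "has_taylor_exp p f x \<longleftrightarrow>
     (\<exists>P. cont_poly_deg_le (nat \<lfloor>p\<rfloor>) P \<and>
        (\<forall>\<epsilon>>0. \<exists>\<delta>>0. \<forall>h. norm h < \<delta> \<longrightarrow>
            \<bar>f (x + h) - f x - P h\<bar> \<le> \<epsilon> * norm h powr p))"

definition Tp_smooth :: "real \<Rightarrow> ('a::real_normed_vector \<Rightarrow> real) \<Rightarrow> bool" where
  "Tp_smooth p f \<longleftrightarrow> (\<forall>x. has_taylor_exp p f x)"

definition bump_function :: "('a::real_normed_vector \<Rightarrow> real) \<Rightarrow> bool" where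
  "bump_function f \<longleftrightarrow> (\<exists>x. f x \<noteq> 0) \<and> bounded {x. f x \<noteq> 0}"

text \<open>T is a (linear, surjective, isometric) identification of X with L_p(M):
  each x is represented by a measurable p-integrable function T x (up to a.e. equality),
  norm x equals the L_p norm of T x, T is linear modulo null sets, and every
  measurable p-integrable function is a.e. equal to some T x.\<close>
definition Lp_isometry :: "real \<Rightarrow> 'm measure \<Rightarrow> ('a::real_normed_vector \<Rightarrow> 'm \<Rightarrow> real) \<Rightarrow> bool" where
  "Lp_isometry p M T \<longleftrightarrow>
     (\<forall>x. T x \<in> borel_measurable M \<and> integrable M (\<lambda>\<omega>. \<bar>T x \<omega>\<bar> powr p) \<and>
          norm x = (\<integral>\<omega>. \<bar>T x \<omega>\<bar> powr p \<partial>M) powr (1 / p)) \<and>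
     (\<forall>x y. AE \<omega> in M. T (x + y) \<omega> = T x \<omega> + T y \<omega>) \<and>
     (\<forall>c x. AE \<omega> in M. T (c *\<^sub>R x) \<omega> = c * T x \<omega>) \<and>
     (\<forall>g \<in> borel_measurable M. integrable M (\<lambda>\<omega>. \<bar>g \<omega>\<bar> powr p) \<longrightarrow>
          (\<exists>x. AE \<omega> in M. T x \<omega> = g \<omega>))"

definition Lp_space_iso :: "real \<Rightarrow> 'm measure \<Rightarrow> 'a::real_normed_vector itself \<Rightarrow> bool" where
  "Lp_space_iso p M _ \<longleftrightarrow> (\<exists>T :: 'a \<Rightarrow> 'm \<Rightarrow> real. Lp_isometry p M T)"

end

theory Submission
  imports Defs
begin

definition klin :: "nat \<Rightarrow> ((nat \<Rightarrow> 'a::real_normed_vector) \<Rightarrow> real) \<Rightarrow> bool" where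
  "klin k A \<longleftrightarrow> (\<forall>v w. (\<forall>i<k. v i = w i) \<longrightarrow> A v = A w) \<and>
        (\<forall>v i a x y. i < k \<longrightarrow> A (v(i := a *\<^sub>R x + y)) = a * A (v(i := x)) + A (v(i := y)))"

lemma klin_dep: "klin k A \<Longrightarrow> (\<And>i. i<k \<Longrightarrow> v i = w i) \<Longrightarrow> A v = A w"
  unfolding klin_def by blast

lemma klin_lin: "klin k A \<Longrightarrow> i < k \<Longrightarrow> A (v(i := a *\<^sub>R x + y)) = a * A (v(i := x)) + A (v(i := y))"
  unfolding klin_def by blast

lemma klin_zero: assumes "klin k A" "i < k" shows "A (v(i := 0)) = 0"
  using klin_lin[OF assms, of v 1 0 0] by simp

lemma klin_scale: assumes "klin k A" "i < k" shows "A (v(i := a *\<^sub>R x)) = a * A (v(i := x))"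
  using klin_lin[OF assms, of v a x 0] klin_zero[OF assms, of v] by simp

lemma klin_add: assumes "klin k A" "i < k" shows "A (v(i := x + y)) = A (v(i := x)) + A (v(i := y))"
  using klin_lin[OF assms, of v 1 x y] by simp

lemma klin_sum: assumes "klin k A" "i < k" "finite F"
  shows "A (v(i := (\<Sum>j\<in>F. g j))) = (\<Sum>j\<in>F. A (v(i := g j)))"
  using assms(3)
proof (induction F rule: finite_induct)
  case empty then show ?case using klin_zero[OF assms(1,2), of v] by (simp only: sum.empty)
next
  case (insert x F)
  have "A (v(i := (\<Sum>j\<in>insert x F. g j))) = A (v(i := g x + (\<Sum>j\<in>F. g j)))"
    by (simp only: sum.insert[OF insert(1,2)])
  also have "\<dots> = A (v(i := g x)) + A (v(i := (\<Sum>j\<in>F. g j)))" by (rule klin_add[OF assms(1,2)])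
  also have "\<dots> = (\<Sum>j\<in>insert x F. A (v(i := g j)))" using insert(3) by (simp only: sum.insert[OF insert(1,2)])
  finally show ?case .
qed

lemma klin_homog: assumes "klin k A"
  shows "A (\<lambda>_. a *\<^sub>R h) = a ^ k * A (\<lambda>_. h)"
proof -
  have "m \<le> k \<Longrightarrow> A (\<lambda>r. if r < m then a *\<^sub>R h else h) = a ^ m * A (\<lambda>_. h)" for m
  proof (induction m)
    case 0 then show ?case by simp
  next
    case (Suc m)
    have e1: "(\<lambda>r. if r < Suc m then a *\<^sub>R h else h) = (\<lambda>r. if r < m then a *\<^sub>R h else h)(m := a *\<^sub>R h)"
      by (auto simp: fun_eq_iff)
    have e2: "(\<lambda>r. if r < m then a *\<^sub>R h else h) = (\<lambda>r. if r < m then a *\<^sub>R h else h)(m := h)"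
      by (auto simp: fun_eq_iff)
    have "A (\<lambda>r. if r < Suc m then a *\<^sub>R h else h) = a * A (\<lambda>r. if r < m then a *\<^sub>R h else h)"
      using Suc.prems klin_scale[OF assms, of m "(\<lambda>r. if r < m then a *\<^sub>R h else h)" a h] e1 e2[symmetric] by simp
    then show ?case using Suc by simp
  qed
  from this[of k] show ?thesis
    using klin_dep[OF assms, of "\<lambda>r. if r < k then a *\<^sub>R h else h" "\<lambda>_. a *\<^sub>R h"] by simp
qed

lemma chp_unfold: "cont_homog_poly k Q \<longleftrightarrow> (\<exists>A. klin k A \<and> (\<exists>C. \<forall>v. \<bar>A v\<bar> \<le> C * (\<Prod>i<k. norm (v i))) \<and> (\<forall>h. Q h = A (\<lambda>_. h)))"
  unfolding cont_homog_poly_def klin_def by blast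

lemma chp_homog: "cont_homog_poly k Q \<Longrightarrow> Q (a *\<^sub>R h) = a ^ k * Q h"
  unfolding chp_unfold using klin_homog by metis

lemma chp_zero: "cont_homog_poly k Q \<Longrightarrow> k \<ge> 1 \<Longrightarrow> Q 0 = 0"
  using chp_homog[of k Q 0 0] by (simp add: power_0_left)

lemma chp_const: "cont_homog_poly 0 Q \<Longrightarrow> Q h = Q 0"
  using chp_homog[of 0 Q 0 h] by simp

lemma chp_bound: assumes "cont_homog_poly k Q" shows "\<exists>C. \<forall>h. \<bar>Q h\<bar> \<le> C * norm h ^ k"
proof -
  obtain A C where AC: "\<forall>v. \<bar>A v\<bar> \<le> C * (\<Prod>i<k. norm (v i))" "\<forall>h. Q h = A (\<lambda>_. h)"
    using assms unfolding chp_unfold by blast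
  then have "\<bar>Q h\<bar> \<le> C * norm h ^ k" for h
    using spec[OF AC(1), of "\<lambda>_. h"] by (simp add: prod_constant)
  then show ?thesis by blast
qed


lemma greedy_signs:
  fixes a :: "nat \<Rightarrow> nat \<Rightarrow> real"
  assumes "finite F"
  shows "\<exists>\<sigma>::nat\<Rightarrow>real. (\<forall>i. \<sigma> i = 1 \<or> \<sigma> i = -1) \<and>
           (\<Sum>i\<in>F. a i i) \<le> (\<Sum>i\<in>F. \<Sum>j\<in>F. \<sigma> i * \<sigma> j * a i j)"
  using assms
proof (induction F rule: finite_induct)
  case empty
  show ?case by (rule exI[of _ "\<lambda>_. 1"]) simp
next
  case (insert x F)
  obtain \<sigma> :: "nat \<Rightarrow> real" where s: "\<forall>i. \<sigma> i = 1 \<or> \<sigma> i = -1"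
    and ih: "(\<Sum>i\<in>F. a i i) \<le> (\<Sum>i\<in>F. \<Sum>j\<in>F. \<sigma> i * \<sigma> j * a i j)"
    using insert.IH by blast
  define c where "c = (\<Sum>j\<in>F. \<sigma> j * (a x j + a j x))"
  define s0 :: real where "s0 = (if c \<ge> 0 then 1 else -1)"
  define \<sigma>' where "\<sigma>' = \<sigma>(x := s0)"
  have s0sq: "s0 * s0 = 1" by (simp add: s0_def)
  have s0c: "s0 * c \<ge> 0" by (simp add: s0_def)
  have eqF: "\<And>j. j \<in> F \<Longrightarrow> \<sigma>' j = \<sigma> j" using insert(2) by (auto simp: \<sigma>'_def)
  have "(\<Sum>i\<in>insert x F. \<Sum>j\<in>insert x F. \<sigma>' i * \<sigma>' j * a i j)
      = (\<Sum>j\<in>insert x F. \<sigma>' x * \<sigma>' j * a x j) + (\<Sum>i\<in>F. \<Sum>j\<in>insert x F. \<sigma>' i * \<sigma>' j * a i j)"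
    using insert(1,2) by (simp add: sum.insert)
  also have "(\<Sum>j\<in>insert x F. \<sigma>' x * \<sigma>' j * a x j) = s0 * s0 * a x x + (\<Sum>j\<in>F. s0 * \<sigma> j * a x j)"
    using insert(1,2) eqF by (simp add: sum.insert \<sigma>'_def)
  also have "(\<Sum>i\<in>F. \<Sum>j\<in>insert x F. \<sigma>' i * \<sigma>' j * a i j)
      = (\<Sum>i\<in>F. \<sigma> i * s0 * a i x + (\<Sum>j\<in>F. \<sigma> i * \<sigma> j * a i j))"
    using insert(1,2) eqF by (intro sum.cong) (auto simp: sum.insert \<sigma>'_def)
  also have "\<dots> = (\<Sum>i\<in>F. \<sigma> i * s0 * a i x) + (\<Sum>i\<in>F. \<Sum>j\<in>F. \<sigma> i * \<sigma> j * a i j)"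
    by (simp add: sum.distrib)
  finally have eq: "(\<Sum>i\<in>insert x F. \<Sum>j\<in>insert x F. \<sigma>' i * \<sigma>' j * a i j)
      = a x x + s0 * c + (\<Sum>i\<in>F. \<Sum>j\<in>F. \<sigma> i * \<sigma> j * a i j)"
    by (simp add: s0sq c_def sum_distrib_left sum.distrib algebra_simps)
  have "(\<Sum>i\<in>insert x F. a i i) = a x x + (\<Sum>i\<in>F. a i i)" using insert(1,2) by simp
  also have "\<dots> \<le> (\<Sum>i\<in>insert x F. \<Sum>j\<in>insert x F. \<sigma>' i * \<sigma>' j * a i j)"
    unfolding eq using ih s0c by linarith
  finally show ?case using s by (intro exI[of _ \<sigma>']) (auto simp: \<sigma>'_def s0_def)
qed

lemma sign_norm:
  fixes u :: "nat \<Rightarrow> 'a::real_normed_vector"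
  assumes p: "p > 0"
    and U0: "\<And>F c. finite F \<Longrightarrow> norm (\<Sum>i\<in>F. c i *\<^sub>R u i) powr p = (\<Sum>i\<in>F. \<bar>c i\<bar> powr p)"
    and F: "finite F" and c: "\<And>i. \<bar>c i\<bar> = 1"
  shows "norm (\<Sum>i\<in>F. c i *\<^sub>R u i) = real (card F) powr (1/p)"
proof -
  have "norm (\<Sum>i\<in>F. c i *\<^sub>R u i) powr p = real (card F)" using U0[OF F, of c] c by simp
  then have "(norm (\<Sum>i\<in>F. c i *\<^sub>R u i) powr p) powr (1/p) = real (card F) powr (1/p)" by simp
  then show ?thesis using p by (simp add: powr_powr)
qed

lemma pitt_bound:
  fixes u :: "nat \<Rightarrow> 'a::real_normed_vector"
  assumes p: "p > 0"
    and U0: "\<And>F c. finite F \<Longrightarrow> norm (\<Sum>i\<in>F. c i *\<^sub>R u i) powr p = (\<Sum>i\<in>F. \<bar>c i\<bar> powr p)"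
    and F: "finite F"
  shows "klin (Suc m) A \<Longrightarrow> (\<forall>v. \<bar>A v\<bar> \<le> C * (\<Prod>r<Suc m. norm (v r))) \<Longrightarrow>
     (\<forall>r i. \<tau> r i = 1 \<or> \<tau> r i = -1) \<Longrightarrow>
     (\<Sum>i\<in>F. A (\<lambda>r. \<tau> r i *\<^sub>R u i)) \<le> C * real (card F) powr (real (Suc m) / p)"
proof (induction m arbitrary: A C \<tau>)
  case 0
  define v0 :: "nat \<Rightarrow> 'a" where "v0 = (\<lambda>_. 0)"
  have e: "A (\<lambda>r. \<tau> r i *\<^sub>R u i) = A (v0(0 := \<tau> 0 i *\<^sub>R u i))" for i
    by (rule klin_dep[OF 0(1)]) simp
  have "(\<Sum>i\<in>F. A (\<lambda>r. \<tau> r i *\<^sub>R u i)) = A (v0(0 := (\<Sum>i\<in>F. \<tau> 0 i *\<^sub>R u i)))"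
    unfolding e by (rule klin_sum[OF 0(1) _ F, symmetric]) simp
  also have "\<dots> \<le> C * norm (\<Sum>i\<in>F. \<tau> 0 i *\<^sub>R u i)"
  proof -
    define S where "S = (\<Sum>i\<in>F. \<tau> 0 i *\<^sub>R u i)"
    have b: "\<bar>A (v0(0 := S))\<bar> \<le> C * (\<Prod>r<Suc 0. norm ((v0(0 := S)) r))" using 0(2) by blast
    have eq: "(\<Prod>r<Suc 0. norm ((v0(0 := S)) r)) = norm S" by simp
    show ?thesis using order_trans[OF abs_ge_self[of "A (v0(0 := S))"] b[unfolded eq]] unfolding S_def[symmetric] by simp
  qed
  also have "norm (\<Sum>i\<in>F. \<tau> 0 i *\<^sub>R u i) = real (card F) powr (1/p)"
  proof (rule sign_norm[OF p U0 F])
    fix i show "\<bar>\<tau> 0 i\<bar> = 1" using 0(3) by (metis abs_1 abs_minus_cancel)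
  qed
  finally show ?case by simp
next
  case (Suc m)
  define L where "L = Suc m"
  define w where "w i = (\<lambda>r. \<tau> r i *\<^sub>R u i)" for i
  define a where "a i j = A ((w i)(L := \<tau> L j *\<^sub>R u j))" for i j
  have diag: "a i i = A (w i)" for i
  proof -
    have "(w i)(L := \<tau> L i *\<^sub>R u i) = w i" by (rule ext) (simp add: w_def)
    then show ?thesis unfolding a_def by simp
  qed
  obtain \<sigma> :: "nat \<Rightarrow> real" where s: "\<forall>i. \<sigma> i = 1 \<or> \<sigma> i = -1"
    and g: "(\<Sum>i\<in>F. a i i) \<le> (\<Sum>i\<in>F. \<Sum>j\<in>F. \<sigma> i * \<sigma> j * a i j)"
    using greedy_signs[OF F, of a] by blast
  define y where "y = (\<Sum>j\<in>F. (\<sigma> j * \<tau> L j) *\<^sub>R u j)"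
  define \<tau>' where "\<tau>' r i = (if r = 0 then \<sigma> i * \<tau> 0 i else \<tau> r i)" for r i
  define A' where "A' v = A (v(L := y))" for v
  have L: "L < Suc (Suc m)" "0 < Suc (Suc m)" "L \<noteq> 0" by (auto simp: L_def)
  have row: "(\<Sum>j\<in>F. \<sigma> i * \<sigma> j * a i j) = A' (\<lambda>r. \<tau>' r i *\<^sub>R u i)" for i
  proof -
    have "(\<Sum>j\<in>F. \<sigma> i * \<sigma> j * a i j) = \<sigma> i * (\<Sum>j\<in>F. \<sigma> j * a i j)"
      by (simp add: sum_distrib_left mult.assoc)
    also have "(\<Sum>j\<in>F. \<sigma> j * a i j) = (\<Sum>j\<in>F. A ((w i)(L := (\<sigma> j * \<tau> L j) *\<^sub>R u j)))"
    proof (intro sum.cong refl)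
      fix j show "\<sigma> j * a i j = A ((w i)(L := (\<sigma> j * \<tau> L j) *\<^sub>R u j))"
        unfolding a_def scaleR_scaleR[symmetric] by (rule klin_scale[OF Suc.prems(1) L(1), symmetric])
    qed
    also have "\<dots> = A ((w i)(L := y))"
      unfolding y_def by (rule klin_sum[OF Suc.prems(1) L(1) F, symmetric])
    also have "\<sigma> i * A ((w i)(L := y)) = A (((w i)(L := y))(0 := \<sigma> i *\<^sub>R (((w i)(L := y)) 0)))"
      by (subst klin_scale[OF Suc.prems(1) L(2)]) (simp only: fun_upd_triv)
    also have "((w i)(L := y))(0 := \<sigma> i *\<^sub>R (((w i)(L := y)) 0)) = (\<lambda>r. \<tau>' r i *\<^sub>R u i)(L := y)"
      using L(3) by (auto simp: fun_eq_iff w_def \<tau>'_def)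
    finally show ?thesis unfolding A'_def .
  qed
  have klinA': "klin (Suc m) A'"
  proof -
    have "A' v = A' v'" if "\<forall>i<Suc m. v i = v' i" for v v'
      unfolding A'_def by (rule klin_dep[OF Suc.prems(1)]) (use that in \<open>auto simp: L_def\<close>)
    moreover have "A' (v(i := b *\<^sub>R x + z)) = b * A' (v(i := x)) + A' (v(i := z))" if "i < Suc m" for v i b x z
    proof -
      have ne: "i \<noteq> L" using that by (simp add: L_def)
      have "A' (v(i := b *\<^sub>R x + z)) = A ((v(L := y))(i := b *\<^sub>R x + z))"
        unfolding A'_def using ne by (simp add: fun_upd_twist)
      also have "\<dots> = b * A ((v(L := y))(i := x)) + A ((v(L := y))(i := z))"
        by (rule klin_lin[OF Suc.prems(1)]) (use that in simp)
      finally show ?thesis unfolding A'_def using ne by (simp add: fun_upd_twist)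
    qed
    ultimately show ?thesis unfolding klin_def by blast
  qed
  have ny: "norm y = real (card F) powr (1/p)"
    unfolding y_def
  proof (rule sign_norm[OF p U0 F])
    fix j
    have "\<bar>\<sigma> j\<bar> = 1" using s[rule_format, of j] by auto
    moreover have "\<bar>\<tau> L j\<bar> = 1" using Suc.prems(3)[rule_format, of L j] by auto
    ultimately show "\<bar>\<sigma> j * \<tau> L j\<bar> = 1" by (simp add: abs_mult)
  qed
  have bound': "\<forall>v. \<bar>A' v\<bar> \<le> (C * norm y) * (\<Prod>r<Suc m. norm (v r))"
  proof
    fix v
    have eq: "(\<Prod>r<Suc (Suc m). norm ((v(L := y)) r)) = (\<Prod>r<Suc m. norm (v r)) * norm y"
      unfolding prod.lessThan_Suc by (simp add: L_def)
    have b: "\<bar>A (v(L := y))\<bar> \<le> C * (\<Prod>r<Suc (Suc m). norm ((v(L := y)) r))"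
      using Suc.prems(2) by blast
    show "\<bar>A' v\<bar> \<le> (C * norm y) * (\<Prod>r<Suc m. norm (v r))"
      using b[unfolded eq] unfolding A'_def by (simp only: mult_ac)
  qed
  have s': "\<forall>r i. \<tau>' r i = 1 \<or> \<tau>' r i = -1"
  proof (intro allI)
    fix r i
    have "\<sigma> i = 1 \<or> \<sigma> i = -1" "\<tau> r i = 1 \<or> \<tau> r i = -1" "\<tau> 0 i = 1 \<or> \<tau> 0 i = -1"
      using s Suc.prems(3) by blast+
    then show "\<tau>' r i = 1 \<or> \<tau>' r i = -1" unfolding \<tau>'_def by auto
  qed
  have "(\<Sum>i\<in>F. A (\<lambda>r. \<tau> r i *\<^sub>R u i)) = (\<Sum>i\<in>F. a i i)" by (simp add: diag w_def)
  also have "\<dots> \<le> (\<Sum>i\<in>F. A' (\<lambda>r. \<tau>' r i *\<^sub>R u i))" using g by (simp add: row)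
  also have "\<dots> \<le> (C * norm y) * real (card F) powr (real (Suc m) / p)"
    by (rule Suc.IH[OF klinA' bound' s'])
  also have "\<dots> = C * real (card F) powr (real (Suc (Suc m)) / p)"
    unfolding ny by (simp add: mult.assoc powr_add[symmetric] add_divide_distrib)
  finally show ?case .
qed

lemma pitt_aux:
  fixes u :: "nat \<Rightarrow> 'a::real_normed_vector"
  assumes p: "p > 0"
    and U0: "\<And>F c. finite F \<Longrightarrow> norm (\<Sum>i\<in>F. c i *\<^sub>R u i) powr p = (\<Sum>i\<in>F. \<bar>c i\<bar> powr p)"
    and kl: "klin k B" and bd: "\<forall>v. \<bar>B v\<bar> \<le> C * (\<Prod>r<k. norm (v r))"
    and k: "1 \<le> k" "real k < p" and d: "\<delta> > 0"
  shows "finite {n. B (\<lambda>_. u n) \<ge> \<delta>}"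
proof (rule ccontr)
  assume inf: "infinite {n. B (\<lambda>_. u n) \<ge> \<delta>}"
  obtain m where km: "k = Suc m" using k(1) by (cases k) auto
  define \<alpha> where "\<alpha> = 1 - real k / p"
  have a: "\<alpha> > 0" using k p by (simp add: \<alpha>_def field_simps)
  define X where "X = \<bar>C\<bar> / \<delta> + 1"
  have "\<bar>C\<bar> / \<delta> \<ge> 0" using d by simp
  then have X: "X > 0" unfolding X_def by linarith
  define N where "N = nat \<lceil>X powr (1/\<alpha>)\<rceil> + 1"
  have "N \<ge> 1" unfolding N_def by linarith
  then have N1: "real N \<ge> 1" by simp
  have NX: "real N \<ge> X powr (1/\<alpha>)"
  proof -
    have "X powr (1/\<alpha>) \<le> real (nat \<lceil>X powr (1/\<alpha>)\<rceil>)" by (rule real_nat_ceiling_ge)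
    moreover have "real N = real (nat \<lceil>X powr (1/\<alpha>)\<rceil>) + 1" unfolding N_def by (simp only: of_nat_add of_nat_1)
    ultimately show ?thesis by linarith
  qed
  have "real N powr \<alpha> \<ge> (X powr (1/\<alpha>)) powr \<alpha>"
    using NX a by (intro powr_mono2) auto
  also have "(X powr (1/\<alpha>)) powr \<alpha> = X" using a X by (simp add: powr_powr)
  finally have NaX: "real N powr \<alpha> \<ge> X" .
  obtain F where F: "F \<subseteq> {n. B (\<lambda>_. u n) \<ge> \<delta>}" "finite F" "card F = N"
    using infinite_arbitrarily_large[OF inf] by blast
  have "real N * \<delta> \<le> (\<Sum>i\<in>F. B (\<lambda>_. u i))"
    using F sum_bounded_below[of F \<delta> "\<lambda>i. B (\<lambda>_. u i)"] by auto
  also have "(\<Sum>i\<in>F. B (\<lambda>_. u i)) = (\<Sum>i\<in>F. B (\<lambda>r. (\<lambda>_ _. 1::real) r i *\<^sub>R u i))" by simp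
  also have "\<dots> \<le> C * real (card F) powr (real (Suc m) / p)"
    by (rule pitt_bound[OF p U0 F(2)]) (use kl bd km in auto)
  finally have ineq: "real N * \<delta> \<le> C * real N powr (real k / p)" using F(3) km by simp
  have "real N = real N powr (real k / p) * real N powr \<alpha>"
    using N1 by (simp add: \<alpha>_def powr_add[symmetric])
  then have "real N powr (real k / p) * (real N powr \<alpha> * \<delta>) \<le> real N powr (real k / p) * C"
    using ineq by (metis mult.assoc mult.commute)
  moreover have "real N powr (real k / p) > 0" using N1 by simp
  ultimately have "real N powr \<alpha> * \<delta> \<le> C" by simp
  moreover have "X * \<delta> \<le> real N powr \<alpha> * \<delta>" using NaX d by simp
  moreover have "X * \<delta> = \<bar>C\<bar> + \<delta>" using d by (simp add: X_def field_simps)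
  ultimately show False using d by linarith
qed

lemma pitt_limit:
  fixes u :: "nat \<Rightarrow> 'a::real_normed_vector"
  assumes p: "p > 0"
    and U0: "\<And>F c. finite F \<Longrightarrow> norm (\<Sum>i\<in>F. c i *\<^sub>R u i) powr p = (\<Sum>i\<in>F. \<bar>c i\<bar> powr p)"
    and kl: "klin k A" and bd: "\<forall>v. \<bar>A v\<bar> \<le> C * (\<Prod>r<k. norm (v r))"
    and k: "1 \<le> k" "real k < p"
  shows "(\<lambda>n. A (\<lambda>_. u n)) \<longlonglongrightarrow> 0"
proof -
  have kl': "klin k (\<lambda>v. - A v)" using kl unfolding klin_def by auto
  have bd': "\<forall>v. \<bar>- A v\<bar> \<le> C * (\<Prod>r<k. norm (v r))" using bd by simp
  show ?thesis
  proof (rule tendstoI)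
    fix e :: real assume e: "e > 0"
    have f1: "finite {n. A (\<lambda>_. u n) \<ge> e}" by (rule pitt_aux[OF p U0 kl bd k e])
    have f2: "finite {n. - A (\<lambda>_. u n) \<ge> e}" by (rule pitt_aux[OF p U0 kl' bd' k e])
    have "{n. \<not> dist (A (\<lambda>_. u n)) 0 < e} \<subseteq> {n. A (\<lambda>_. u n) \<ge> e} \<union> {n. - A (\<lambda>_. u n) \<ge> e}"
      by auto
    then have "finite {n. \<not> dist (A (\<lambda>_. u n)) 0 < e}" using f1 f2 finite_subset by blast
    then show "eventually (\<lambda>n. dist (A (\<lambda>_. u n)) 0 < e) sequentially"
      unfolding cofinite_eq_sequentially[symmetric] eventually_cofinite .
  qed
qed

lemma chp_pitt:
  fixes u :: "nat \<Rightarrow> 'a::real_normed_vector"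
  assumes p: "p > 0"
    and U0: "\<And>F c. finite F \<Longrightarrow> norm (\<Sum>i\<in>F. c i *\<^sub>R u i) powr p = (\<Sum>i\<in>F. \<bar>c i\<bar> powr p)"
    and Q: "cont_homog_poly k Q" and k: "1 \<le> k" "real k < p"
  shows "(\<lambda>n. Q (u n)) \<longlonglongrightarrow> 0"
proof -
  obtain A C where "klin k A" "\<forall>v. \<bar>A v\<bar> \<le> C * (\<Prod>i<k. norm (v i))" "\<forall>h. Q h = A (\<lambda>_. h)"
    using Q unfolding chp_unfold by blast
  then show ?thesis using pitt_limit[OF p U0 _ _ k] by simp
qed


lemma cont_normpowr: "p > 0 \<Longrightarrow> continuous_on UNIV (\<lambda>y::'a::real_normed_vector. norm (y - c) powr p)"
  by (intro continuous_on_powr' continuous_intros) auto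

lemma varprin:
  fixes g :: "'a::banach \<Rightarrow> real" and u :: "nat \<Rightarrow> 'a"
  assumes p: "p \<ge> 1"
    and U1: "\<And>w s. (\<lambda>n. norm (w + s *\<^sub>R u n) powr p) \<longlonglongrightarrow> norm w powr p + \<bar>s\<bar> powr p"
    and cont: "\<And>x. isCont g x"
    and flat: "\<And>x e. e > 0 \<Longrightarrow> \<exists>\<delta>>0. \<forall>t. 0 < t \<and> t < \<delta> \<longrightarrow>
        eventually (\<lambda>n. g (x + t *\<^sub>R u n) + g (x + (-t) *\<^sub>R u n) - 2 * g x \<ge> - e * t powr p) sequentially"
    and g0: "g 0 > 0"
    and supp: "\<And>x. g x \<noteq> 0 \<Longrightarrow> norm x < R"
  shows False
proof -
  have p0: "p > 0" using p by simp
  define a where "a = g 0"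
  have a: "a > 0" using g0 by (simp add: a_def)
  have R: "R > 0" using supp[of 0] g0 by simp
  define N where "N y = norm y powr p" for y :: 'a
  define \<epsilon> where "\<epsilon> = a / (2 * (R powr p + 1))"
  have Rp1: "R powr p + 1 > 0" by (simp add: add_nonneg_pos)
  then have eps: "\<epsilon> > 0" using a unfolding \<epsilon>_def by simp
  have epsR: "\<epsilon> * R powr p < a / 2"
  proof -
    have "\<epsilon> * R powr p = (a/2) * (R powr p / (R powr p + 1))" by (simp add: \<epsilon>_def field_simps)
    also have "\<dots> < (a/2) * 1" using a by (intro mult_strict_left_mono) (auto simp: Rp1 divide_less_eq)
    finally show ?thesis by simp
  qed
  have epsa: "\<epsilon> \<le> a / 2"
  proof -
    have "\<epsilon> = (a/2) / (R powr p + 1)" by (simp add: \<epsilon>_def field_simps)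
    also have "\<dots> \<le> (a/2) / 1" using a Rp1 by (intro divide_left_mono) auto
    finally show ?thesis by simp
  qed
  have N0: "N 0 = 0" by (simp add: N_def)
  have Nnn: "N y \<ge> 0" for y by (simp add: N_def)
  have NR: "norm y \<le> R \<Longrightarrow> N y \<le> R powr p" for y unfolding N_def using p0 by (intro powr_mono2) auto
  define Sp where "Sp x = {y. g y - g x \<ge> - \<epsilon> * (N y - N x) \<and> N y - N x \<ge> (1/2) * norm (y - x) powr p \<and> norm y \<le> R}" for x
  have self: "norm x \<le> R \<Longrightarrow> x \<in> Sp x" for x by (simp add: Sp_def)
  have contg: "continuous_on UNIV g" using cont by (simp add: continuous_at_imp_continuous_on)
  have closedSp: "closed (Sp x)" for x
  proof -
    have "Sp x = {y. - \<epsilon> * (N y - N x) \<le> g y - g x} \<inter> {y. (1/2) * norm (y - x) powr p \<le> N y - N x} \<inter> {y. norm y \<le> R}"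
      by (auto simp: Sp_def)
    moreover have "closed {y. - \<epsilon> * (N y - N x) \<le> g y - g x}"
      unfolding N_def by (intro closed_Collect_le continuous_intros contg cont_normpowr[OF p0, of 0, simplified])
    moreover have "closed {y. (1/2) * norm (y - x) powr p \<le> N y - N x}"
      unfolding N_def by (intro closed_Collect_le continuous_intros cont_normpowr[OF p0] cont_normpowr[OF p0, of 0, simplified])
    moreover have "closed {y::'a. norm y \<le> R}" by (intro closed_Collect_le continuous_intros)
    ultimately show ?thesis by auto
  qed
  define PP where "PP n st = (((n::nat) = 0 \<longrightarrow> st = (0, Sp 0)) \<and> fst st \<in> snd st \<and> snd st \<subseteq> {y. norm y \<le> R})" for n and st :: "'a \<times> 'a set"
  define QQ where "QQ n st st' = (fst st' \<in> snd st \<and> N (fst st') > Sup (N ` snd st) - (1/2)^n \<and> snd st' = snd st \<inter> Sp (fst st'))"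
    for n :: nat and st st' :: "'a \<times> 'a set"
  have bdd: "S \<subseteq> {y. norm y \<le> R} \<Longrightarrow> bdd_above (N ` S)" for S
    using NR by (auto intro!: bdd_aboveI[of _ "R powr p"])
  have "\<exists>st. \<forall>n::nat. PP n (st n) \<and> QQ n (st n) (st (Suc n))"
  proof (rule dependent_nat_choice)
    show "\<exists>x. PP 0 x" using R by (intro exI[of _ "(0, Sp 0)"]) (auto simp: PP_def Sp_def)
  next
    fix st n assume "PP n st"
    then have st: "fst st \<in> snd st" "snd st \<subseteq> {y. norm y \<le> R}" by (auto simp: PP_def)
    have ne: "N ` snd st \<noteq> {}" using st by auto
    have "Sup (N ` snd st) - (1/2)^n < Sup (N ` snd st)" by simp
    then obtain x' where x': "x' \<in> snd st" "N x' > Sup (N ` snd st) - (1/2)^n"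
      using less_cSupD[OF ne] by blast
    show "\<exists>st'. PP (Suc n) st' \<and> QQ n st st'"
      using x' st self[of x'] by (intro exI[of _ "(x', snd st \<inter> Sp x')"]) (auto simp: PP_def QQ_def)
  qed
  then obtain st where st: "\<And>n. PP n (st n)" "\<And>n. QQ n (st n) (st (Suc n))" by blast
  define xs where "xs n = fst (st n)" for n
  define Ss where "Ss n = snd (st n)" for n
  have xs0: "xs 0 = 0" and Ss0: "Ss 0 = Sp 0" using st(1)[of 0] by (auto simp: PP_def xs_def Ss_def)
  have xsS: "xs n \<in> Ss n" for n using st(1)[of n] by (auto simp: PP_def xs_def Ss_def)
  have SsR: "Ss n \<subseteq> {y. norm y \<le> R}" for n using st(1)[of n] by (auto simp: PP_def Ss_def)
  have xsSuc: "xs (Suc n) \<in> Ss n" and NSuc: "N (xs (Suc n)) > Sup (N ` Ss n) - (1/2)^n"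
    and SsSuc: "Ss (Suc n) = Ss n \<inter> Sp (xs (Suc n))" for n
    using st(2)[of n] by (auto simp: QQ_def xs_def Ss_def)
  have Ss_char: "y \<in> Ss n \<longleftrightarrow> (\<forall>j\<le>n. y \<in> Sp (xs j))" for y n
  proof (induction n)
    case 0 then show ?case by (simp add: Ss0 xs0)
  next
    case (Suc n) then show ?case by (auto simp: SsSuc le_Suc_eq)
  qed
  have Ss_mono: "n \<le> m \<Longrightarrow> Ss m \<subseteq> Ss n" for n m by (auto simp: Ss_char)
  have xs_in: "n \<le> m \<Longrightarrow> xs m \<in> Ss n" for n m using Ss_mono xsS by blast
  have NSup: "y \<in> Ss n \<Longrightarrow> N y \<le> Sup (N ` Ss n)" for y n
    by (rule cSup_upper) (use bdd[OF SsR] in auto)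
  have step: "norm (xs m - xs (Suc n)) \<le> (2 * (1/2)^n) powr (1/p)" if "Suc n \<le> m" for n m
  proof -
    have "xs m \<in> Sp (xs (Suc n))" using xs_in[OF that] Ss_char by blast
    then have "(1/2) * norm (xs m - xs (Suc n)) powr p \<le> N (xs m) - N (xs (Suc n))" by (simp add: Sp_def)
    also have "\<dots> \<le> (1/2)^n" using NSup[OF xs_in[of n m]] NSuc[of n] that by simp
    finally have "norm (xs m - xs (Suc n)) powr p \<le> 2 * (1/2)^n" by simp
    then have "(norm (xs m - xs (Suc n)) powr p) powr (1/p) \<le> (2 * (1/2)^n) powr (1/p)"
      using p0 by (intro powr_mono2) auto
    then show ?thesis using p0 by (simp add: powr_powr)
  qed
  have lim0: "(\<lambda>n. (2 * (1/2::real)^n) powr (1/p)) \<longlonglongrightarrow> 0"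
  proof -
    have "(\<lambda>n. 2 * (1/2::real)^n) \<longlonglongrightarrow> 2 * 0"
      by (intro tendsto_intros LIMSEQ_power_zero) auto
    then have "(\<lambda>n. (2 * (1/2::real)^n) powr (1/p)) \<longlonglongrightarrow> 0 powr (1/p)"
      using p0 by (intro tendsto_powr') auto
    then show ?thesis by simp
  qed
  have "Cauchy xs"
  proof (rule metric_CauchyI)
    fix e :: real assume e: "e > 0"
    obtain n where n: "(2 * (1/2::real)^n) powr (1/p) < e/2"
      using lim0 e unfolding LIMSEQ_def by (metis dist_real_def diff_zero half_gt_zero le_refl abs_of_nonneg powr_ge_zero)
    show "\<exists>M. \<forall>m\<ge>M. \<forall>k\<ge>M. dist (xs m) (xs k) < e"
    proof (intro exI allI impI)
      fix m k assume "Suc n \<le> m" "Suc n \<le> k"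
      then have "norm (xs m - xs (Suc n)) < e/2" "norm (xs k - xs (Suc n)) < e/2"
        using step n by (meson le_less_trans)+
      moreover have "norm (xs m - xs k) \<le> norm (xs m - xs (Suc n)) + norm (xs k - xs (Suc n))"
        using norm_triangle_ineq4[of "xs m - xs (Suc n)" "xs k - xs (Suc n)"] by simp
      ultimately show "dist (xs m) (xs k) < e" by (simp add: dist_norm)
    qed
  qed
  then obtain xb where xb: "xs \<longlonglongrightarrow> xb" using Cauchy_convergent_iff convergent_def by blast
  have xbSp: "xb \<in> Sp (xs j)" for j
  proof -
    have "(\<lambda>m. xs (m + j)) \<longlonglongrightarrow> xb" using xb by (rule LIMSEQ_ignore_initial_segment)
    moreover have "xs (m + j) \<in> Sp (xs j)" for m using xs_in[of j "m + j"] Ss_char by auto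
    ultimately show ?thesis using closed_sequentially[OF closedSp[of "xs j"], of "\<lambda>m. xs (m + j)" xb] by blast
  qed
  have xbS: "xb \<in> Ss n" for n using xbSp Ss_char by blast
  have SupB: "Sup (N ` Ss n) \<le> N xb + (1/2)^n" for n
  proof -
    have h: "N xb - N (xs (Suc n)) \<ge> (1/2) * norm (xb - xs (Suc n)) powr p"
      using xbSp[of "Suc n"] by (simp add: Sp_def)
    have "(1/2) * norm (xb - xs (Suc n)) powr p \<ge> 0" by simp
    then have "N xb - N (xs (Suc n)) \<ge> 0" using h by linarith
    then show ?thesis using NSuc[of n] by simp
  qed
  have xbR: "norm xb \<le> R" using xbSp[of 0] by (simp add: Sp_def)
  have gxb: "g xb > a / 2"
  proof -
    have "g xb - a \<ge> - \<epsilon> * N xb" using xbSp[of 0] by (simp add: Sp_def xs0 N0 a_def)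
    moreover have "\<epsilon> * N xb \<le> \<epsilon> * R powr p" using NR[OF xbR] eps by simp
    ultimately show ?thesis using epsR by linarith
  qed
  obtain \<delta> where d: "\<delta> > 0" and dflat: "\<forall>t. 0 < t \<and> t < \<delta> \<longrightarrow>
        eventually (\<lambda>n. g (xb + t *\<^sub>R u n) + g (xb + (-t) *\<^sub>R u n) - 2 * g xb \<ge> - (\<epsilon>/4) * t powr p) sequentially"
    using flat[of "\<epsilon>/4" xb] eps by auto
  define t where "t = min (\<delta>/2) (1/2)"
  have t: "t > 0" "t < \<delta>" "t < 1" using d by (auto simp: t_def)
  define tp where "tp = t powr p"
  have tp: "tp > 0" "tp \<le> 1" using t p0 by (auto simp: tp_def powr_le1)
  obtain K where K: "(1/2::real)^K < tp/4" using real_arch_pow_inv[of "tp/4" "1/2"] tp by auto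
  have E1: "eventually (\<lambda>n. g (xb + t *\<^sub>R u n) + g (xb + (-t) *\<^sub>R u n) - 2 * g xb \<ge> - (\<epsilon>/4) * tp) sequentially"
    using dflat t unfolding tp_def by auto
  have E2: "eventually (\<lambda>n. N (xb + s *\<^sub>R u n) > N xb + (3/4) * tp) sequentially" if "\<bar>s\<bar> = t" for s
  proof -
    have "(\<lambda>n. N (xb + s *\<^sub>R u n)) \<longlonglongrightarrow> N xb + tp" using U1[of xb s] that by (simp add: N_def tp_def)
    moreover have "N xb + (3/4) * tp < N xb + tp" using tp by simp
    ultimately show ?thesis by (rule order_tendstoD)
  qed
  have E3: "eventually (\<lambda>n. N (xb + s *\<^sub>R u n) - N (xs j) - (1/2) * norm ((xb - xs j) + s *\<^sub>R u n) powr p > 0) sequentially"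
    if "\<bar>s\<bar> = t" for s j
  proof -
    have "(\<lambda>n. N (xb + s *\<^sub>R u n) - N (xs j) - (1/2) * norm ((xb - xs j) + s *\<^sub>R u n) powr p)
        \<longlonglongrightarrow> (N xb + tp) - N (xs j) - (1/2) * (norm (xb - xs j) powr p + tp)"
      using U1[of xb s] U1[of "xb - xs j" s] that unfolding N_def tp_def by (intro tendsto_intros) auto
    moreover have "(N xb + tp) - N (xs j) - (1/2) * (norm (xb - xs j) powr p + tp) > 0"
      using xbSp[of j] tp by (simp add: Sp_def)
    ultimately show ?thesis by (rule order_tendstoD)
  qed
  define Good where "Good n = (g (xb + t *\<^sub>R u n) + g (xb + (-t) *\<^sub>R u n) - 2 * g xb \<ge> - (\<epsilon>/4) * tp
      \<and> (\<forall>s\<in>{t, -t}. N (xb + s *\<^sub>R u n) > N xb + (3/4) * tp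
          \<and> (\<forall>j\<in>{..K}. N (xb + s *\<^sub>R u n) - N (xs j) - (1/2) * norm ((xb - xs j) + s *\<^sub>R u n) powr p > 0)))" for n
  have "eventually Good sequentially"
    unfolding Good_def using t(1) by (intro eventually_conj E1 eventually_ball_finite ballI E2 E3) auto
  then obtain n where "Good n" unfolding eventually_sequentially by blast
  then have n1: "g (xb + t *\<^sub>R u n) + g (xb + (-t) *\<^sub>R u n) - 2 * g xb \<ge> - (\<epsilon>/4) * tp"
    and n2: "\<And>s. s \<in> {t, -t} \<Longrightarrow> N (xb + s *\<^sub>R u n) > N xb + (3/4) * tp"
    and n3: "\<And>s j. s \<in> {t, -t} \<Longrightarrow> j \<le> K \<Longrightarrow> N (xb + s *\<^sub>R u n) - N (xs j) - (1/2) * norm ((xb - xs j) + s *\<^sub>R u n) powr p > 0"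
    unfolding Good_def by blast+
  obtain s where s: "s \<in> {t, -t}" and gs: "g (xb + s *\<^sub>R u n) - g xb \<ge> - (\<epsilon>/8) * tp"
  proof (cases "g (xb + t *\<^sub>R u n) - g xb \<ge> - (\<epsilon>/8) * tp")
    case True then show ?thesis using that[of t] by auto
  next
    case False then show ?thesis using that[of "-t"] n1 by auto
  qed
  define y where "y = xb + s *\<^sub>R u n"
  have Ny: "N y > N xb + (3/4) * tp" using n2[OF s] by (simp add: y_def)
  have gy: "g y > 0"
  proof -
    have "(\<epsilon>/8) * tp \<le> (\<epsilon>/8) * 1" using tp eps by (intro mult_left_mono) auto
    then show ?thesis using gs gxb epsa a unfolding y_def by linarith
  qed
  have "y \<in> Ss K"
    unfolding Ss_char
  proof (intro allI impI)
    fix j assume j: "j \<le> K"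
    have A: "g y - g (xs j) \<ge> - \<epsilon> * (N y - N (xs j))"
    proof -
      have "\<epsilon> * ((1/8) * tp) \<le> \<epsilon> * (N y - N xb)" using Ny tp eps by (intro mult_left_mono) auto
      moreover have "g xb - g (xs j) \<ge> - \<epsilon> * (N xb - N (xs j))" using xbSp[of j] by (simp add: Sp_def)
      ultimately show ?thesis using gs unfolding y_def by (simp add: algebra_simps)
    qed
    have B: "N y - N (xs j) \<ge> (1/2) * norm (y - xs j) powr p"
      using n3[OF s j] by (simp add: y_def algebra_simps)
    have C: "norm y \<le> R" using supp[of y] gy by simp
    show "y \<in> Sp (xs j)" using A B C by (simp add: Sp_def)
  qed
  then have "N y \<le> Sup (N ` Ss K)" by (rule NSup)
  also have "\<dots> \<le> N xb + (1/2)^K" by (rule SupB)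
  finally show False using Ny K tp by simp
qed


lemma taylor_unfold:
  assumes "has_taylor_exp p f x"
  obtains Q :: "nat \<Rightarrow> 'a::real_normed_vector \<Rightarrow> real" where
    "\<And>k. k \<le> nat \<lfloor>p\<rfloor> \<Longrightarrow> cont_homog_poly k (Q k)"
    "\<And>e. e > 0 \<Longrightarrow> \<exists>\<delta>>0. \<forall>h. norm h < \<delta> \<longrightarrow>
        \<bar>f (x + h) - f x - (\<Sum>k\<le>nat \<lfloor>p\<rfloor>. Q k h)\<bar> \<le> e * norm h powr p"
proof -
  obtain P where P: "cont_poly_deg_le (nat \<lfloor>p\<rfloor>) P" and est: "\<forall>\<epsilon>>0. \<exists>\<delta>>0. \<forall>h. norm h < \<delta> \<longrightarrow>
            \<bar>f (x + h) - f x - P h\<bar> \<le> \<epsilon> * norm h powr p"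
    using assms unfolding has_taylor_exp_def by blast
  obtain Q where Q: "\<forall>k\<le>nat \<lfloor>p\<rfloor>. cont_homog_poly k (Q k)" "\<forall>h. P h = (\<Sum>k\<le>nat \<lfloor>p\<rfloor>. Q k h)"
    using P unfolding cont_poly_deg_le_def by blast
  show ?thesis by (rule that[of Q]) (use Q est in auto)
qed

lemma Q0_zero:
  assumes Q: "\<And>k. k \<le> d \<Longrightarrow> cont_homog_poly k (Q k)"
    and est: "\<And>e. e > 0 \<Longrightarrow> \<exists>\<delta>>0. \<forall>h. norm h < \<delta> \<longrightarrow>
        \<bar>f (x + h) - f x - (\<Sum>k\<le>d. Q k h)\<bar> \<le> e * norm h powr p"
  shows "Q 0 h = 0"
proof -
  obtain \<delta> where "\<delta> > 0" "\<forall>h. norm h < \<delta> \<longrightarrow> \<bar>f (x + h) - f x - (\<Sum>k\<le>d. Q k h)\<bar> \<le> 1 * norm h powr p"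
    using est[of 1] by auto
  moreover have "norm (0::'a) < \<delta>" using \<open>\<delta> > 0\<close> by simp
  ultimately have "\<bar>f (x + 0) - f x - (\<Sum>k\<le>d. Q k 0)\<bar> \<le> 1 * norm (0::'a) powr p"
    by blast
  then have s0: "(\<Sum>k\<le>d. Q k 0) = 0" by simp
  have "(\<Sum>k\<le>d. Q k 0) = (\<Sum>k\<le>d. if k = 0 then Q 0 0 else 0)"
    by (intro sum.cong refl) (auto intro: chp_zero Q)
  also have "\<dots> = Q 0 0" by simp
  finally have "Q 0 0 = 0" using s0 by simp
  moreover have Q0c: "cont_homog_poly 0 (Q 0)" using Q by simp
  ultimately show ?thesis using chp_const[OF Q0c, of h] by (simp only:)
qed

lemma taylor_isCont:
  fixes f :: "'a::real_normed_vector \<Rightarrow> real"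
  assumes p: "p \<ge> 1" and T: "has_taylor_exp p f x"
  shows "isCont f x"
proof -
  obtain Q where Q: "\<And>k. k \<le> nat \<lfloor>p\<rfloor> \<Longrightarrow> cont_homog_poly k (Q k)"
    and est: "\<And>e. e > 0 \<Longrightarrow> \<exists>\<delta>>0. \<forall>h. norm h < \<delta> \<longrightarrow>
        \<bar>f (x + h) - f x - (\<Sum>k\<le>nat \<lfloor>p\<rfloor>. Q k h)\<bar> \<le> e * norm h powr p"
    using taylor_unfold[OF T] by blast
  have Q0: "Q 0 h = 0" for h by (rule Q0_zero[OF Q est])
  have Qk: "((\<lambda>h. Q k h) \<longlongrightarrow> 0) (at 0)" if k: "k \<le> nat \<lfloor>p\<rfloor>" for k
  proof (cases "k = 0")
    case True then show ?thesis by (simp add: Q0)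
  next
    case False
    obtain C where C: "\<forall>h. \<bar>Q k h\<bar> \<le> C * norm h ^ k" using chp_bound[OF Q[OF k]] by blast
    have lim: "((\<lambda>h::'a. C * norm h ^ k) \<longlongrightarrow> C * norm (0::'a) ^ k) (at 0)"
      by (intro tendsto_intros)
    have eq: "C * norm (0::'a) ^ k = 0" using False by (simp add: zero_power)
    have "((\<lambda>h::'a. C * norm h ^ k) \<longlongrightarrow> 0) (at 0)" using lim unfolding eq .
    then show ?thesis by (rule Lim_null_comparison[rotated]) (use C in auto)
  qed
  have Psum: "((\<lambda>h. \<Sum>k\<le>nat \<lfloor>p\<rfloor>. Q k h) \<longlongrightarrow> 0) (at 0)"
    using tendsto_sum[of "{..nat \<lfloor>p\<rfloor>}" "\<lambda>k h. Q k h" "\<lambda>_. 0"] Qk by simp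
  have rem: "((\<lambda>h. f (x + h) - f x - (\<Sum>k\<le>nat \<lfloor>p\<rfloor>. Q k h)) \<longlongrightarrow> 0) (at 0)"
  proof (rule Lim_null_comparison)
    obtain \<delta> where d: "\<delta> > 0" "\<forall>h. norm h < \<delta> \<longrightarrow> \<bar>f (x + h) - f x - (\<Sum>k\<le>nat \<lfloor>p\<rfloor>. Q k h)\<bar> \<le> 1 * norm h powr p"
      using est[of 1] by auto
    show "eventually (\<lambda>h. norm (f (x + h) - f x - (\<Sum>k\<le>nat \<lfloor>p\<rfloor>. Q k h)) \<le> norm h powr p) (at 0)"
      unfolding eventually_at using d by (intro exI[of _ \<delta>]) auto
    have "((\<lambda>h::'a. norm h powr p) \<longlongrightarrow> norm (0::'a) powr p) (at 0)"
      using p by (intro tendsto_intros) auto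
    then show "((\<lambda>h::'a. norm h powr p) \<longlongrightarrow> 0) (at 0)" by simp
  qed
  have "((\<lambda>h. (f (x + h) - f x - (\<Sum>k\<le>nat \<lfloor>p\<rfloor>. Q k h)) + (\<Sum>k\<le>nat \<lfloor>p\<rfloor>. Q k h) + f x) \<longlongrightarrow> 0 + 0 + f x) (at 0)"
    by (intro tendsto_add rem Psum tendsto_const)
  then show ?thesis unfolding isCont_iff by simp
qed

lemma taylor_flat:
  fixes f :: "'a::real_normed_vector \<Rightarrow> real" and u :: "nat \<Rightarrow> 'a"
  assumes p: "p \<ge> 1" and pe: "\<not> (\<exists>k::int. p = 2 * of_int k)"
    and U0: "\<And>F c. finite F \<Longrightarrow> norm (\<Sum>i\<in>F. c i *\<^sub>R u i) powr p = (\<Sum>i\<in>F. \<bar>c i\<bar> powr p)"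
    and nu: "\<And>n. norm (u n) = 1"
    and T: "has_taylor_exp p f x" and e: "e > 0"
  shows "\<exists>\<delta>>0. \<forall>t. 0 < t \<and> t < \<delta> \<longrightarrow>
        eventually (\<lambda>n. \<bar>f (x + t *\<^sub>R u n) + f (x + (-t) *\<^sub>R u n) - 2 * f x\<bar> \<le> e * t powr p) sequentially"
proof -
  have p0: "p > 0" using p by simp
  define d where "d = nat \<lfloor>p\<rfloor>"
  obtain Q where Q: "\<And>k. k \<le> d \<Longrightarrow> cont_homog_poly k (Q k)"
    and est: "\<And>e. e > 0 \<Longrightarrow> \<exists>\<delta>>0. \<forall>h. norm h < \<delta> \<longrightarrow>
        \<bar>f (x + h) - f x - (\<Sum>k\<le>d. Q k h)\<bar> \<le> e * norm h powr p"
    using taylor_unfold[OF T] unfolding d_def by blast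
  have Q0: "Q 0 h = 0" for h by (rule Q0_zero[OF Q est])
  obtain \<delta> where d0: "\<delta> > 0" and dest: "\<forall>h. norm h < \<delta> \<longrightarrow>
        \<bar>f (x + h) - f x - (\<Sum>k\<le>d. Q k h)\<bar> \<le> (e/3) * norm h powr p"
    using est[of "e/3"] e by auto
  have kp: "real k < p" if kle: "k \<le> d" and kev: "even k" for k
  proof -
    have fl: "\<lfloor>p\<rfloor> \<ge> 0" using p by simp
    have "int k \<le> \<lfloor>p\<rfloor>" using kle unfolding d_def by (simp add: le_nat_iff[OF fl])
    then have "real k \<le> p" by (simp add: le_floor_iff)
    moreover have "real k \<noteq> p"
    proof
      assume "real k = p"
      obtain m where "k = 2 * m" using kev by (elim evenE)
      then have "p = 2 * of_int (int m)" using \<open>real k = p\<close> by simp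
      then show False using pe by blast
    qed
    ultimately show ?thesis by simp
  qed
  show ?thesis
  proof (intro exI[of _ \<delta>] conjI allI impI d0)
    fix t :: real assume t: "0 < t \<and> t < \<delta>"
    have tp: "t powr p > 0" using t by simp
    have Pc: "(\<Sum>k\<le>d. Q k (c *\<^sub>R u n)) = (\<Sum>k\<le>d. c ^ k * Q k (u n))" for c n
      by (intro sum.cong refl) (simp add: chp_homog[OF Q])
    have lim: "(\<lambda>n. \<Sum>k\<le>d. (t ^ k + (-t) ^ k) * Q k (u n)) \<longlonglongrightarrow> (\<Sum>k\<le>d. 0)"
    proof (intro tendsto_sum)
      fix k assume "k \<in> {..d}"
      then have k: "k \<le> d" by simp
      show "(\<lambda>n. (t ^ k + (-t) ^ k) * Q k (u n)) \<longlonglongrightarrow> 0"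
      proof (cases "k = 0")
        case True then show ?thesis by (simp add: Q0)
      next
        case False
        show ?thesis
        proof (cases "even k")
          case True
          have "(\<lambda>n. Q k (u n)) \<longlonglongrightarrow> 0"
            by (rule chp_pitt[OF p0 U0 Q[OF k]]) (use False True kp k in auto)
          then show ?thesis using tendsto_mult_left[of _ 0 sequentially "t ^ k + (-t) ^ k"] by simp
        next
          case odd: False
          then have "t ^ k + (-t) ^ k = 0" by (simp add: power_minus_odd)
          then show ?thesis by simp
        qed
      qed
    qed
    then have "(\<lambda>n. \<Sum>k\<le>d. (t ^ k + (-t) ^ k) * Q k (u n)) \<longlonglongrightarrow> 0" by simp
    then have lim': "(\<lambda>n. \<bar>\<Sum>k\<le>d. (t ^ k + (-t) ^ k) * Q k (u n)\<bar>) \<longlonglongrightarrow> 0"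
      by (rule tendsto_rabs_zero)
    have "(e/3) * t powr p > 0" using e tp by simp
    from order_tendstoD(2)[OF lim' this]
    have "eventually (\<lambda>n. \<bar>\<Sum>k\<le>d. (t ^ k + (-t) ^ k) * Q k (u n)\<bar> < (e/3) * t powr p) sequentially" .
    then show "eventually (\<lambda>n. \<bar>f (x + t *\<^sub>R u n) + f (x + (-t) *\<^sub>R u n) - 2 * f x\<bar> \<le> e * t powr p) sequentially"
    proof (rule eventually_mono)
      fix n assume small: "\<bar>\<Sum>k\<le>d. (t ^ k + (-t) ^ k) * Q k (u n)\<bar> < (e/3) * t powr p"
      have n1: "norm (t *\<^sub>R u n) = t" "norm ((-t) *\<^sub>R u n) = t" using nu t by auto
      have a1: "\<bar>f (x + t *\<^sub>R u n) - f x - (\<Sum>k\<le>d. t ^ k * Q k (u n))\<bar> \<le> (e/3) * t powr p"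
        using dest[rule_format, of "t *\<^sub>R u n"] n1 t unfolding Pc by simp
      have a2: "\<bar>f (x + (-t) *\<^sub>R u n) - f x - (\<Sum>k\<le>d. (-t) ^ k * Q k (u n))\<bar> \<le> (e/3) * t powr p"
        using dest[rule_format, of "(-t) *\<^sub>R u n"] n1 t unfolding Pc by simp
      have sp: "(\<Sum>k\<le>d. (t ^ k + (-t) ^ k) * Q k (u n)) = (\<Sum>k\<le>d. t ^ k * Q k (u n)) + (\<Sum>k\<le>d. (-t) ^ k * Q k (u n))"
        by (simp add: distrib_right sum.distrib)
      show "\<bar>f (x + t *\<^sub>R u n) + f (x + (-t) *\<^sub>R u n) - 2 * f x\<bar> \<le> e * t powr p"
      proof -
        define X1 where "X1 = f (x + t *\<^sub>R u n) - f x - (\<Sum>k\<le>d. t ^ k * Q k (u n))"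
        define X2 where "X2 = f (x + (-t) *\<^sub>R u n) - f x - (\<Sum>k\<le>d. (-t) ^ k * Q k (u n))"
        define S where "S = (\<Sum>k\<le>d. (t ^ k + (-t) ^ k) * Q k (u n))"
        have eq: "f (x + t *\<^sub>R u n) + f (x + (-t) *\<^sub>R u n) - 2 * f x = X1 + X2 + S"
          unfolding X1_def X2_def S_def sp by simp
        have "\<bar>X1 + X2 + S\<bar> \<le> \<bar>X1\<bar> + \<bar>X2\<bar> + \<bar>S\<bar>" by (rule order_trans[OF abs_triangle_ineq]) (simp add: abs_triangle_ineq)
        moreover have "\<bar>X1\<bar> + \<bar>X2\<bar> + \<bar>S\<bar> \<le> e * t powr p"
          using a1 a2 small unfolding X1_def[symmetric] X2_def[symmetric] S_def[symmetric] by simp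
        ultimately show ?thesis unfolding eq by linarith
      qed
    qed
  qed
qed


lemma no_bump_abs:
  fixes f :: "'a::banach \<Rightarrow> real" and u :: "nat \<Rightarrow> 'a"
  assumes p: "p \<ge> 1" and pe: "\<not> (\<exists>k::int. p = 2 * of_int k)"
    and U0: "\<And>F c. finite F \<Longrightarrow> norm (\<Sum>i\<in>F. c i *\<^sub>R u i) powr p = (\<Sum>i\<in>F. \<bar>c i\<bar> powr p)"
    and U1: "\<And>w s. (\<lambda>n. norm (w + s *\<^sub>R u n) powr p) \<longlonglongrightarrow> norm w powr p + \<bar>s\<bar> powr p"
    and Tp: "Tp_smooth p f" and bump: "bump_function f"
  shows False
proof -
  have p0: "p > 0" using p by simp
  have nu: "norm (u n) = 1" for n
  proof -
    have "norm (\<Sum>i\<in>{n}. (\<lambda>_. 1::real) i *\<^sub>R u i) powr p = (\<Sum>i\<in>{n}. \<bar>(\<lambda>_. 1::real) i\<bar> powr p)"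
      by (rule U0) simp
    then have "norm (u n) powr p = 1" by simp
    then have "(norm (u n) powr p) powr (1/p) = 1" by simp
    then show ?thesis using p0 by (simp add: powr_powr)
  qed
  obtain x0 where x0: "f x0 \<noteq> 0" using bump unfolding bump_function_def by blast
  obtain B where B: "\<And>x. f x \<noteq> 0 \<Longrightarrow> norm x \<le> B"
    using bump unfolding bump_function_def bounded_iff by blast
  define \<sigma> :: real where "\<sigma> = (if f x0 > 0 then 1 else -1)"
  have sabs: "\<bar>\<sigma>\<bar> = 1" by (simp add: \<sigma>_def)
  define g where "g x = \<sigma> * f (x + x0)" for x
  define R where "R = B + norm x0 + 1"
  show False
  proof (rule varprin[of p u g R])
    show "p \<ge> 1" by (rule p)
    show "\<And>w s. (\<lambda>n. norm (w + s *\<^sub>R u n) powr p) \<longlonglongrightarrow> norm w powr p + \<bar>s\<bar> powr p" by (rule U1)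
  next
    fix x
    have c: "isCont f (x + x0)" using taylor_isCont[OF p] Tp unfolding Tp_smooth_def by blast
    have "((\<lambda>y. y + x0) \<longlongrightarrow> x + x0) (at x)" by (intro tendsto_intros)
    then have "((\<lambda>y. f (y + x0)) \<longlongrightarrow> f (x + x0)) (at x)" by (rule isCont_tendsto_compose[OF c])
    then have "((\<lambda>y. \<sigma> * f (y + x0)) \<longlongrightarrow> \<sigma> * f (x + x0)) (at x)" by (rule tendsto_mult_left)
    then show "isCont g x" unfolding isCont_def g_def .
  next
    fix x and e :: real assume e: "e > 0"
    obtain \<delta> where d: "\<delta> > 0" and H: "\<forall>t. 0 < t \<and> t < \<delta> \<longrightarrow>
        eventually (\<lambda>n. \<bar>f ((x + x0) + t *\<^sub>R u n) + f ((x + x0) + (-t) *\<^sub>R u n) - 2 * f (x + x0)\<bar> \<le> e * t powr p) sequentially"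
      using taylor_flat[OF p pe U0 nu _ e, of f "x + x0"] Tp unfolding Tp_smooth_def by blast
    show "\<exists>\<delta>>0. \<forall>t. 0 < t \<and> t < \<delta> \<longrightarrow>
        eventually (\<lambda>n. g (x + t *\<^sub>R u n) + g (x + (-t) *\<^sub>R u n) - 2 * g x \<ge> - e * t powr p) sequentially"
    proof (intro exI[of _ \<delta>] conjI allI impI d)
      fix t :: real assume t: "0 < t \<and> t < \<delta>"
      show "eventually (\<lambda>n. g (x + t *\<^sub>R u n) + g (x + (-t) *\<^sub>R u n) - 2 * g x \<ge> - e * t powr p) sequentially"
        using H[rule_format, OF t]
      proof (rule eventually_mono)
        fix n
        assume a: "\<bar>f ((x + x0) + t *\<^sub>R u n) + f ((x + x0) + (-t) *\<^sub>R u n) - 2 * f (x + x0)\<bar> \<le> e * t powr p"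
        define D where "D = f ((x + x0) + t *\<^sub>R u n) + f ((x + x0) + (-t) *\<^sub>R u n) - 2 * f (x + x0)"
        have eq: "g (x + t *\<^sub>R u n) + g (x + (-t) *\<^sub>R u n) - 2 * g x = \<sigma> * D"
          unfolding g_def D_def by (simp add: algebra_simps)
        have "\<bar>\<sigma> * D\<bar> \<le> e * t powr p" using a sabs unfolding D_def[symmetric] by (simp add: abs_mult)
        then show "g (x + t *\<^sub>R u n) + g (x + (-t) *\<^sub>R u n) - 2 * g x \<ge> - e * t powr p"
          unfolding eq by linarith
      qed
    qed
  next
    show "g 0 > 0" using x0 by (auto simp: g_def \<sigma>_def)
  next
    fix x assume "g x \<noteq> 0"
    then have "f (x + x0) \<noteq> 0" by (simp add: g_def)
    then have "norm (x + x0) \<le> B" by (rule B)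
    moreover have "norm x \<le> norm (x + x0) + norm x0" using norm_triangle_ineq4[of "x + x0" x0] by simp
    ultimately show "norm x < R" unfolding R_def by linarith
  qed
qed


context
  fixes p :: real and M :: "'m measure" and T :: "'a::real_normed_vector \<Rightarrow> 'm \<Rightarrow> real"
  assumes p: "p \<ge> 1" and iso: "Lp_isometry p M T"
begin

lemma p0: "p > 0" using p by simp

lemma T_meas[measurable]: "T x \<in> borel_measurable M"
  using iso unfolding Lp_isometry_def by blast

lemma T_int: "integrable M (\<lambda>\<omega>. \<bar>T x \<omega>\<bar> powr p)"
  using iso unfolding Lp_isometry_def by blast

lemma T_add: "AE \<omega> in M. T (x + y) \<omega> = T x \<omega> + T y \<omega>"
  using iso unfolding Lp_isometry_def by blast

lemma T_scale: "AE \<omega> in M. T (c *\<^sub>R x) \<omega> = c * T x \<omega>"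
  using iso unfolding Lp_isometry_def by blast

lemma T_surj: "g \<in> borel_measurable M \<Longrightarrow> integrable M (\<lambda>\<omega>. \<bar>g \<omega>\<bar> powr p) \<Longrightarrow> \<exists>x. AE \<omega> in M. T x \<omega> = g \<omega>"
  using iso unfolding Lp_isometry_def by blast

lemma norm_int: "norm x powr p = (\<integral>\<omega>. \<bar>T x \<omega>\<bar> powr p \<partial>M)"
proof -
  have n: "norm x = (\<integral>\<omega>. \<bar>T x \<omega>\<bar> powr p \<partial>M) powr (1 / p)"
    using iso unfolding Lp_isometry_def by blast
  have nn: "(\<integral>\<omega>. \<bar>T x \<omega>\<bar> powr p \<partial>M) \<ge> 0" by (rule integral_nonneg_AE) auto
  show ?thesis unfolding n using p0 nn by (simp add: powr_powr)
qed

lemma norm_cong: "AE \<omega> in M. T x \<omega> = g \<omega> \<Longrightarrow> g \<in> borel_measurable M \<Longrightarrow>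
    norm x powr p = (\<integral>\<omega>. \<bar>g \<omega>\<bar> powr p \<partial>M)"
  unfolding norm_int by (rule integral_cong_AE) auto

lemma T_diff: "AE \<omega> in M. T (x - y) \<omega> = T x \<omega> - T y \<omega>"
proof -
  have "AE \<omega> in M. T (x + (-1) *\<^sub>R y) \<omega> = T x \<omega> + T ((-1) *\<^sub>R y) \<omega>" by (rule T_add)
  moreover have "AE \<omega> in M. T ((-1) *\<^sub>R y) \<omega> = (-1) * T y \<omega>" by (rule T_scale)
  ultimately show ?thesis by eventually_elim simp
qed

lemma T_zero: "AE \<omega> in M. T 0 \<omega> = 0"
  using T_scale[of 0 0] by simp

lemma norm_zero_iff_AE: "x = 0 \<longleftrightarrow> (AE \<omega> in M. T x \<omega> = 0)"
proof
  assume "x = 0" then show "AE \<omega> in M. T x \<omega> = 0" using T_zero by simp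
next
  assume a: "AE \<omega> in M. T x \<omega> = 0"
  have "norm x powr p = (\<integral>\<omega>. \<bar>(0::real)\<bar> powr p \<partial>M)" by (rule norm_cong[OF a]) simp
  then have "norm x powr p = 0" by simp
  then show "x = 0" using p0 by simp
qed

lemma T_inj: "AE \<omega> in M. T x \<omega> = T y \<omega> \<Longrightarrow> x = y"
proof -
  assume a: "AE \<omega> in M. T x \<omega> = T y \<omega>"
  have "AE \<omega> in M. T (x - y) \<omega> = 0" using T_diff[of x y] a by eventually_elim simp
  then have "x - y = 0" using norm_zero_iff_AE by blast
  then show "x = y" by simp
qed

lemma band: assumes B: "B \<in> sets M" shows "\<exists>z. AE \<omega> in M. T z \<omega> = indicator B \<omega> * T x \<omega>"
proof (rule T_surj)
  show "(\<lambda>\<omega>. indicator B \<omega> * T x \<omega>) \<in> borel_measurable M" using B by measurable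
  have "integrable M (\<lambda>\<omega>. indicator B \<omega> *\<^sub>R (\<bar>T x \<omega>\<bar> powr p))"
    by (rule integrable_mult_indicator[OF B T_int])
  moreover have "\<bar>indicator B \<omega> * T x \<omega>\<bar> powr p = indicator B \<omega> *\<^sub>R (\<bar>T x \<omega>\<bar> powr p)" for \<omega>
    using p0 by (auto simp: indicator_def)
  ultimately show "integrable M (\<lambda>\<omega>. \<bar>indicator B \<omega> * T x \<omega>\<bar> powr p)" by simp
qed

lemma disj_add: assumes d: "AE \<omega> in M. T a \<omega> * T b \<omega> = 0"
  shows "norm (a + b) powr p = norm a powr p + norm b powr p"
proof -
  have "norm (a + b) powr p = (\<integral>\<omega>. \<bar>T a \<omega> + T b \<omega>\<bar> powr p \<partial>M)"
    by (rule norm_cong[OF T_add]) simp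
  also have "\<dots> = (\<integral>\<omega>. \<bar>T a \<omega>\<bar> powr p + \<bar>T b \<omega>\<bar> powr p \<partial>M)"
  proof (rule integral_cong_AE)
    show "AE \<omega> in M. \<bar>T a \<omega> + T b \<omega>\<bar> powr p = \<bar>T a \<omega>\<bar> powr p + \<bar>T b \<omega>\<bar> powr p"
      using d by eventually_elim (auto simp: p0)
  qed simp_all
  also have "\<dots> = (\<integral>\<omega>. \<bar>T a \<omega>\<bar> powr p \<partial>M) + (\<integral>\<omega>. \<bar>T b \<omega>\<bar> powr p \<partial>M)"
    by (rule Bochner_Integration.integral_add[OF T_int T_int])
  finally show ?thesis by (simp add: norm_int)
qed

end


lemma cut_lemma:
  fixes r :: "'m \<Rightarrow> real" and M :: "'m measure"
  assumes nn: "\<not> (AE \<omega> in M. \<omega> \<notin> S)"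
    and dich: "\<And>q. (AE \<omega> in M. \<omega> \<in> S \<longrightarrow> q \<le> r \<omega>) \<or> (AE \<omega> in M. \<omega> \<in> S \<longrightarrow> r \<omega> < q)"
  shows "\<exists>c. AE \<omega> in M. \<omega> \<in> S \<longrightarrow> r \<omega> = c"
proof -
  define L where "L = {q. AE \<omega> in M. \<omega> \<in> S \<longrightarrow> q \<le> r \<omega>}"
  have down: "q \<in> L \<Longrightarrow> q' \<le> q \<Longrightarrow> q' \<in> L" for q q'
    unfolding L_def by (auto elim: AE_mp)
  have Lne: "L \<noteq> {}"
  proof
    assume "L = {}"
    then have "\<forall>n::nat. AE \<omega> in M. \<omega> \<in> S \<longrightarrow> r \<omega> < - real n"
      using dich unfolding L_def by blast
    then have "AE \<omega> in M. \<forall>n::nat. \<omega> \<in> S \<longrightarrow> r \<omega> < - real n" by (simp only: AE_all_countable simp_thms)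
    then have "AE \<omega> in M. \<omega> \<notin> S"
    proof (rule AE_mp[OF _ AE_I2], intro impI)
      fix \<omega> assume h: "\<forall>n::nat. \<omega> \<in> S \<longrightarrow> r \<omega> < - real n"
      obtain n :: nat where n: "- r \<omega> < real n" using reals_Archimedean2 by blast
      show "\<omega> \<notin> S"
      proof
        assume "\<omega> \<in> S"
        then have "r \<omega> < - real n" using h by blast
        then show False using n by linarith
      qed
    qed
    then show False using nn by blast
  qed
  have "\<exists>n::nat. real n \<notin> L"
  proof (rule ccontr)
    assume "\<not> (\<exists>n::nat. real n \<notin> L)"
    then have "\<forall>n::nat. AE \<omega> in M. \<omega> \<in> S \<longrightarrow> real n \<le> r \<omega>" unfolding L_def by blast
    then have "AE \<omega> in M. \<forall>n::nat. \<omega> \<in> S \<longrightarrow> real n \<le> r \<omega>" by (simp only: AE_all_countable simp_thms)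
    then have "AE \<omega> in M. \<omega> \<notin> S"
    proof (rule AE_mp[OF _ AE_I2], intro impI)
      fix \<omega> assume h: "\<forall>n::nat. \<omega> \<in> S \<longrightarrow> real n \<le> r \<omega>"
      obtain n :: nat where n: "r \<omega> < real n" using reals_Archimedean2 by blast
      show "\<omega> \<notin> S"
      proof
        assume "\<omega> \<in> S"
        then have "real n \<le> r \<omega>" using h by blast
        then show False using n by linarith
      qed
    qed
    then show False using nn by blast
  qed
  then obtain n0 :: nat where n0: "real n0 \<notin> L" by blast
  have ub: "q \<in> L \<Longrightarrow> q \<le> real n0" for q using down[of q "real n0"] n0 by force
  have bdd: "bdd_above L" by (rule bdd_aboveI[of _ "real n0"]) (rule ub)
  define c where "c = Sup L"
  have ge: "\<forall>k::nat. AE \<omega> in M. \<omega> \<in> S \<longrightarrow> c - inverse (real (Suc k)) \<le> r \<omega>"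
  proof
    fix k :: nat
    have "c - inverse (real (Suc k)) < c" by simp
    then obtain q where "q \<in> L" "c - inverse (real (Suc k)) < q" using less_cSupD[OF Lne] unfolding c_def by blast
    then have "c - inverse (real (Suc k)) \<in> L" using down by simp
    then show "AE \<omega> in M. \<omega> \<in> S \<longrightarrow> c - inverse (real (Suc k)) \<le> r \<omega>" unfolding L_def by simp
  qed
  have le: "\<forall>k::nat. AE \<omega> in M. \<omega> \<in> S \<longrightarrow> r \<omega> < c + inverse (real (Suc k))"
  proof
    fix k :: nat
    have "c + inverse (real (Suc k)) \<notin> L"
    proof
      assume "c + inverse (real (Suc k)) \<in> L"
      then have "c + inverse (real (Suc k)) \<le> c" unfolding c_def by (rule cSup_upper[OF _ bdd])
      then show False by simp
    qed
    then show "AE \<omega> in M. \<omega> \<in> S \<longrightarrow> r \<omega> < c + inverse (real (Suc k))"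
      using dich[of "c + inverse (real (Suc k))"] unfolding L_def by blast
  qed
  have "AE \<omega> in M. \<forall>k::nat. (\<omega> \<in> S \<longrightarrow> c - inverse (real (Suc k)) \<le> r \<omega>) \<and> (\<omega> \<in> S \<longrightarrow> r \<omega> < c + inverse (real (Suc k)))"
    using ge le by (simp only: AE_all_countable AE_conj_iff simp_thms)
  then have "AE \<omega> in M. \<omega> \<in> S \<longrightarrow> r \<omega> = c"
  proof (rule AE_mp[OF _ AE_I2], intro impI)
    fix \<omega> assume h: "\<forall>k::nat. (\<omega> \<in> S \<longrightarrow> c - inverse (real (Suc k)) \<le> r \<omega>) \<and> (\<omega> \<in> S \<longrightarrow> r \<omega> < c + inverse (real (Suc k)))"
      and s: "\<omega> \<in> S"
    show "r \<omega> = c"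
    proof (rule ccontr)
      assume "r \<omega> \<noteq> c"
      then have "\<bar>r \<omega> - c\<bar> > 0" by simp
      then obtain k where k: "inverse (real (Suc k)) < \<bar>r \<omega> - c\<bar>" using reals_Archimedean by blast
      then show False using h[rule_format, of k] s by auto
    qed
  qed
  then show ?thesis by blast
qed


definition Vb :: "'m measure \<Rightarrow> ('a::real_normed_vector \<Rightarrow> 'm \<Rightarrow> real) \<Rightarrow> 'm set \<Rightarrow> 'a set" where
  "Vb M T B = {x. AE \<omega> in M. \<omega> \<notin> B \<longrightarrow> T x \<omega> = 0}"

definition infd :: "'m measure \<Rightarrow> ('a::real_normed_vector \<Rightarrow> 'm \<Rightarrow> real) \<Rightarrow> 'm set \<Rightarrow> bool" where
  "infd M T B \<longleftrightarrow> \<not> (\<exists>S. finite S \<and> Vb M T B \<subseteq> span S)"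

context
  fixes p :: real and M :: "'m measure" and T :: "'a::real_normed_vector \<Rightarrow> 'm \<Rightarrow> real"
  assumes p: "p \<ge> 1" and iso: "Lp_isometry p M T"
begin

lemma Tm[measurable]: "T x \<in> borel_measurable M" by (rule T_meas[OF p iso])

lemma V_add: "x \<in> Vb M T B \<Longrightarrow> y \<in> Vb M T B \<Longrightarrow> x + y \<in> Vb M T B"
  unfolding Vb_def using T_add[OF p iso, of x y] by (auto elim!: AE_mp)

lemma V_scale: "x \<in> Vb M T B \<Longrightarrow> c *\<^sub>R x \<in> Vb M T B"
  unfolding Vb_def using T_scale[OF p iso, of c x] by (auto elim!: AE_mp)

lemma band_V: "AE \<omega> in M. T z \<omega> = indicator B \<omega> * T x \<omega> \<Longrightarrow> z \<in> Vb M T B"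
  unfolding Vb_def by (auto elim!: AE_mp)

lemma V_decomp:
  assumes C: "C \<in> sets M" "C \<subseteq> B" and x: "x \<in> Vb M T B"
  shows "\<exists>x1 x2. x = x1 + x2 \<and> x1 \<in> Vb M T C \<and> x2 \<in> Vb M T (B - C)"
proof -
  obtain x1 where x1: "AE \<omega> in M. T x1 \<omega> = indicator C \<omega> * T x \<omega>" using band[OF p iso C(1)] by blast
  have "x - x1 \<in> Vb M T (B - C)"
    unfolding Vb_def using x1 T_diff[OF p iso, of x x1] x C(2) unfolding Vb_def
    by (auto elim!: AE_mp simp: indicator_def)
  moreover have "x1 \<in> Vb M T C" by (rule band_V[OF x1])
  ultimately show ?thesis by (intro exI[of _ x1] exI[of _ "x - x1"]) auto
qed

lemma inf_split:
  assumes C: "C \<in> sets M" "C \<subseteq> B" and inf: "infd M T B"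
  shows "infd M T C \<or> infd M T (B - C)"
proof (rule ccontr)
  assume "\<not> (infd M T C \<or> infd M T (B - C))"
  then obtain S1 S2 where S: "finite S1" "Vb M T C \<subseteq> span S1" "finite S2" "Vb M T (B - C) \<subseteq> span S2"
    unfolding infd_def by blast
  have "Vb M T B \<subseteq> span (S1 \<union> S2)"
  proof
    fix x assume "x \<in> Vb M T B"
    then obtain x1 x2 where "x = x1 + x2" "x1 \<in> Vb M T C" "x2 \<in> Vb M T (B - C)"
      using V_decomp[OF C] by blast
    then show "x \<in> span (S1 \<union> S2)"
      using S span_mono[of S1 "S1 \<union> S2"] span_mono[of S2 "S1 \<union> S2"] by (auto intro!: span_add)
  qed
  then show False using inf S unfolding infd_def by blast
qed

lemma exists_split:
  assumes B[measurable]: "B \<in> sets M" and inf: "infd M T B"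
  shows "\<exists>C\<in>sets M. C \<subseteq> B \<and> (\<exists>x\<in>Vb M T C. x \<noteq> 0) \<and> (\<exists>x\<in>Vb M T (B - C). x \<noteq> 0)"
proof (rule ccontr)
  assume "\<not> ?thesis"
  then have ns: "\<And>C. C \<in> sets M \<Longrightarrow> C \<subseteq> B \<Longrightarrow> (\<forall>x\<in>Vb M T C. x = 0) \<or> (\<forall>x\<in>Vb M T (B - C). x = 0)"
    by blast
  have "\<not> Vb M T B \<subseteq> span {}" using inf unfolding infd_def by blast
  then obtain x0 where x0: "x0 \<in> Vb M T B" "x0 \<noteq> 0" by auto
  have "\<not> Vb M T B \<subseteq> span {x0}" using inf unfolding infd_def by blast
  then obtain y where y: "y \<in> Vb M T B" "y \<notin> span {x0}" by auto
  have x0B: "AE \<omega> in M. \<omega> \<notin> B \<longrightarrow> T x0 \<omega> = 0" and yB: "AE \<omega> in M. \<omega> \<notin> B \<longrightarrow> T y \<omega> = 0"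
    using x0 y unfolding Vb_def by auto
  define S0 where "S0 = {\<omega> \<in> space M. \<omega> \<in> B \<and> T x0 \<omega> \<noteq> 0}"
  have S0[measurable]: "S0 \<in> sets M" unfolding S0_def by measurable
  have S0B: "S0 \<subseteq> B" by (auto simp: S0_def)
  have "AE \<omega> in M. \<omega> \<notin> S0 \<longrightarrow> T x0 \<omega> = 0" using x0B AE_space by eventually_elim (auto simp: S0_def)
  then have "x0 \<in> Vb M T S0" unfolding Vb_def by simp
  then have VBS0: "\<forall>x\<in>Vb M T (B - S0). x = 0" using ns[OF S0 S0B] x0 by blast
  obtain z where z: "AE \<omega> in M. T z \<omega> = indicator (B - S0) \<omega> * T y \<omega>" using band[OF p iso, of "B - S0" y] by auto
  have "z = 0" using VBS0 band_V[OF z] by blast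
  then have "AE \<omega> in M. T z \<omega> = 0" using norm_zero_iff_AE[OF p iso] by blast
  then have Y1: "AE \<omega> in M. \<omega> \<in> B - S0 \<longrightarrow> T y \<omega> = 0" using z by eventually_elim (auto simp: indicator_def)
  define r where "r \<omega> = T y \<omega> / T x0 \<omega>" for \<omega>
  have dich: "(AE \<omega> in M. \<omega> \<in> S0 \<longrightarrow> q \<le> r \<omega>) \<or> (AE \<omega> in M. \<omega> \<in> S0 \<longrightarrow> r \<omega> < q)" for q
  proof -
    define Cq where "Cq = {\<omega> \<in> space M. \<omega> \<in> S0 \<and> r \<omega> < q}"
    have Cq[measurable]: "Cq \<in> sets M" unfolding Cq_def r_def by measurable
    have CqB: "Cq \<subseteq> B" using S0B by (auto simp: Cq_def)
    show ?thesis
    proof (cases "\<forall>x\<in>Vb M T Cq. x = 0")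
      case True
      obtain w where w: "AE \<omega> in M. T w \<omega> = indicator Cq \<omega> * T x0 \<omega>" using band[OF p iso Cq] by blast
      have "w = 0" using True band_V[OF w] by blast
      then have "AE \<omega> in M. T w \<omega> = 0" using norm_zero_iff_AE[OF p iso] by blast
      then have "AE \<omega> in M. \<omega> \<in> S0 \<longrightarrow> q \<le> r \<omega>"
        using w AE_space by eventually_elim (auto simp: indicator_def Cq_def S0_def not_less)
      then show ?thesis by blast
    next
      case False
      then have True': "\<forall>x\<in>Vb M T (B - Cq). x = 0" using ns[OF Cq CqB] by blast
      obtain w where w: "AE \<omega> in M. T w \<omega> = indicator (B - Cq) \<omega> * T x0 \<omega>" using band[OF p iso, of "B - Cq" x0] by auto
      have "w = 0" using True' band_V[OF w] by blast
      then have "AE \<omega> in M. T w \<omega> = 0" using norm_zero_iff_AE[OF p iso] by blast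
      then have "AE \<omega> in M. \<omega> \<in> S0 \<longrightarrow> r \<omega> < q"
        using w AE_space by eventually_elim (auto simp: indicator_def Cq_def S0_def)
      then show ?thesis by blast
    qed
  qed
  have nn: "\<not> (AE \<omega> in M. \<omega> \<notin> S0)"
  proof
    assume "AE \<omega> in M. \<omega> \<notin> S0"
    then have "AE \<omega> in M. T x0 \<omega> = 0" using x0B AE_space by eventually_elim (auto simp: S0_def)
    then show False using x0(2) norm_zero_iff_AE[OF p iso] by blast
  qed
  obtain c where c: "AE \<omega> in M. \<omega> \<in> S0 \<longrightarrow> r \<omega> = c" using cut_lemma[OF nn dich] by blast
  have "AE \<omega> in M. T y \<omega> = T (c *\<^sub>R x0) \<omega>"
    using c Y1 x0B yB AE_space T_scale[OF p iso, of c x0]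
    by eventually_elim (auto simp: S0_def r_def divide_eq_eq)
  then have "y = c *\<^sub>R x0" by (rule T_inj[OF p iso])
  then have "y \<in> span {x0}" by (simp add: span_base span_scale)
  then show False using y(2) by blast
qed

lemma next_set:
  assumes B: "B \<in> sets M" and inf: "infd M T B"
  shows "\<exists>C\<in>sets M. C \<subseteq> B \<and> (\<exists>x\<in>Vb M T C. x \<noteq> 0) \<and> infd M T (B - C)"
proof -
  obtain C where C: "C \<in> sets M" "C \<subseteq> B" "\<exists>x\<in>Vb M T C. x \<noteq> 0" "\<exists>x\<in>Vb M T (B - C). x \<noteq> 0"
    using exists_split[OF B inf] by blast
  show ?thesis
  proof (cases "infd M T (B - C)")
    case True then show ?thesis using C by blast
  next
    case False
    then have "infd M T C" using inf_split[OF C(1,2) inf] by blast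
    moreover have "B - (B - C) = C" using C(2) by blast
    ultimately show ?thesis using C B by (intro bexI[of _ "B - C"]) auto
  qed
qed

end


context
  fixes p :: real and M :: "'m measure" and T :: "'a::real_normed_vector \<Rightarrow> 'm \<Rightarrow> real"
  assumes p: "p \<ge> 1" and iso: "Lp_isometry p M T"
begin

lemma Tm3[measurable]: "T x \<in> borel_measurable M" by (rule T_meas[OF p iso])

lemma T_sum: "finite F \<Longrightarrow> AE \<omega> in M. T (\<Sum>i\<in>F. g i) \<omega> = (\<Sum>i\<in>F. T (g i) \<omega>)"
proof (induction F rule: finite_induct)
  case empty then show ?case using T_zero[OF p iso] by simp
next
  case (insert x F)
  show ?case using T_add[OF p iso, of "g x" "\<Sum>i\<in>F. g i"] insert(3)
  proof eventually_elim
    case (elim \<omega>)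
    show ?case by (simp only: sum.insert[OF insert(1,2)] elim)
  qed
qed

lemma disjoint_seq:
  assumes inf: "infd M T (space M)"
  shows "\<exists>(C::nat \<Rightarrow> 'm set) (u::nat \<Rightarrow> 'a). (\<forall>n. C n \<in> sets M \<and> u n \<in> Vb M T (C n) \<and> norm (u n) = 1) \<and> disjoint_family C"
proof -
  have "\<exists>Rs. \<forall>n::nat. (Rs n \<in> sets M \<and> infd M T (Rs n)) \<and>
      (\<exists>C\<in>sets M. C \<subseteq> Rs n \<and> Rs (Suc n) = Rs n - C \<and> (\<exists>x\<in>Vb M T C. x \<noteq> 0))"
  proof (rule dependent_nat_choice[where P = "\<lambda>n R. R \<in> sets M \<and> infd M T R"
      and Q = "\<lambda>n R R'. \<exists>C\<in>sets M. C \<subseteq> R \<and> R' = R - C \<and> (\<exists>x\<in>Vb M T C. x \<noteq> 0)"])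
    show "\<exists>R. R \<in> sets M \<and> infd M T R" using inf sets.top by (intro exI[of _ "space M"]) simp
  next
    fix R and n :: nat assume R: "R \<in> sets M \<and> infd M T R"
    then obtain C where C: "C \<in> sets M" "C \<subseteq> R" "\<exists>x\<in>Vb M T C. x \<noteq> 0" "infd M T (R - C)"
      using next_set[OF p iso, of R] R by blast
    have "R - C \<in> sets M" using C(1) R by (intro sets.Diff) auto
    then show "\<exists>R'. (R' \<in> sets M \<and> infd M T R') \<and> (\<exists>C\<in>sets M. C \<subseteq> R \<and> R' = R - C \<and> (\<exists>x\<in>Vb M T C. x \<noteq> 0))"
      using C by (intro exI[of _ "R - C"] conjI bexI[of _ C]) auto
  qed
  then obtain Rs where RR: "\<forall>n::nat. (Rs n \<in> sets M \<and> infd M T (Rs n)) \<and>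
      (\<exists>C\<in>sets M. C \<subseteq> Rs n \<and> Rs (Suc n) = Rs n - C \<and> (\<exists>x\<in>Vb M T C. x \<noteq> 0))" by (rule exE)
  have RC: "\<exists>C\<in>sets M. C \<subseteq> Rs n \<and> Rs (Suc n) = Rs n - C \<and> (\<exists>x\<in>Vb M T C. x \<noteq> 0)" for n
    using spec[OF RR, of n] by (rule conjunct2)
  define Cs where "Cs n = Rs n - Rs (Suc n)" for n
  have Cs: "Cs n \<in> sets M \<and> (\<exists>x\<in>Vb M T (Cs n). x \<noteq> 0)" for n
  proof -
    obtain C where C: "C \<in> sets M" "C \<subseteq> Rs n" "Rs (Suc n) = Rs n - C" "\<exists>x\<in>Vb M T C. x \<noteq> 0"
      using RC[of n] by blast
    have "Cs n = C" using C(2,3) unfolding Cs_def by auto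
    then show ?thesis using C by simp
  qed
  have dec: "decseq Rs"
  proof (rule decseq_SucI)
    fix n
    obtain C where "Rs (Suc n) = Rs n - C" using RC[of n] by blast
    then show "Rs (Suc n) \<le> Rs n" by auto
  qed
  have disj: "disjoint_family Cs"
    unfolding disjoint_family_on_def
  proof (intro ballI impI)
    fix m n :: nat assume "m \<noteq> n"
    then consider "n < m" | "m < n" by linarith
    then show "Cs m \<inter> Cs n = {}"
    proof cases
      case 1
      then have "Rs m \<subseteq> Rs (Suc n)" using decseqD[OF dec, of "Suc n" m] by simp
      then show ?thesis unfolding Cs_def by auto
    next
      case 2
      then have "Rs n \<subseteq> Rs (Suc m)" using decseqD[OF dec, of "Suc m" n] by simp
      then show ?thesis unfolding Cs_def by auto
    qed
  qed
  have "\<forall>n. \<exists>x. x \<in> Vb M T (Cs n) \<and> x \<noteq> 0" using Cs by blast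
  from choice[OF this] obtain xf where xf: "\<And>n. xf n \<in> Vb M T (Cs n) \<and> xf n \<noteq> 0" by blast
  define u where "u n = inverse (norm (xf n)) *\<^sub>R xf n" for n
  have uprop: "u n \<in> Vb M T (Cs n) \<and> norm (u n) = 1" for n
  proof
    show "u n \<in> Vb M T (Cs n)" unfolding u_def by (rule V_scale[OF p iso]) (use xf in blast)
    show "norm (u n) = 1" using xf[of n] by (simp add: u_def)
  qed
  have A: "\<forall>n. Cs n \<in> sets M \<and> u n \<in> Vb M T (Cs n) \<and> norm (u n) = 1" using Cs uprop by blast
  show ?thesis
  proof (intro exI[of _ Cs] exI[of _ u] conjI)
    show "\<forall>n. Cs n \<in> sets M \<and> u n \<in> Vb M T (Cs n) \<and> norm (u n) = 1" by (rule A)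
    show "disjoint_family Cs" by (rule disj)
  qed
qed

lemma U0_from:
  fixes C :: "nat \<Rightarrow> 'm set" and u :: "nat \<Rightarrow> 'a"
  assumes C: "\<And>n. C n \<in> sets M \<and> u n \<in> Vb M T (C n) \<and> norm (u n) = 1" and dj: "disjoint_family C"
  shows "finite F \<Longrightarrow> norm (\<Sum>i\<in>F. c i *\<^sub>R u i) powr p = (\<Sum>i\<in>F. \<bar>c i\<bar> powr p)"
proof (induction F rule: finite_induct)
  case empty then show ?case using p by simp
next
  case (insert x F)
  have "\<forall>i. AE \<omega> in M. \<omega> \<notin> C i \<longrightarrow> T (u i) \<omega> = 0" using C unfolding Vb_def by blast
  then have van: "AE \<omega> in M. \<forall>i. \<omega> \<notin> C i \<longrightarrow> T (u i) \<omega> = 0"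
    by (subst AE_all_countable) assumption
  have sc: "AE \<omega> in M. \<forall>i. T (c i *\<^sub>R u i) \<omega> = c i * T (u i) \<omega>"
    by (subst AE_all_countable) (simp add: T_scale[OF p iso])
  have prod0: "AE \<omega> in M. T (c x *\<^sub>R u x) \<omega> * T (\<Sum>i\<in>F. c i *\<^sub>R u i) \<omega> = 0"
    using van sc T_sum[OF insert(1), of "\<lambda>i. c i *\<^sub>R u i"]
  proof eventually_elim
    case (elim \<omega>)
    have e1: "\<And>i. \<omega> \<notin> C i \<Longrightarrow> T (u i) \<omega> = 0" using elim(1) by blast
    have e2: "\<And>i. T (c i *\<^sub>R u i) \<omega> = c i * T (u i) \<omega>" using elim(2) by blast
    have e3: "T (\<Sum>i\<in>F. c i *\<^sub>R u i) \<omega> = (\<Sum>i\<in>F. T (c i *\<^sub>R u i) \<omega>)" using elim(3) by blast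
    show ?case
    proof (cases "\<omega> \<in> C x")
      case False
      then have "T (c x *\<^sub>R u x) \<omega> = 0" using e1[of x] e2[of x] by simp
      then show ?thesis by simp
    next
      case True
      have "T (c i *\<^sub>R u i) \<omega> = 0" if "i \<in> F" for i
      proof -
        have "i \<noteq> x" using that insert(2) by blast
        then have "C i \<inter> C x = {}" using dj unfolding disjoint_family_on_def by blast
        then have "\<omega> \<notin> C i" using True by blast
        then show ?thesis using e1[of i] e2[of i] by simp
      qed
      then have "(\<Sum>i\<in>F. T (c i *\<^sub>R u i) \<omega>) = 0" by (intro sum.neutral) blast
      then show ?thesis using e3 by simp
    qed
  qed
  have "norm (\<Sum>i\<in>insert x F. c i *\<^sub>R u i) powr p = norm (c x *\<^sub>R u x + (\<Sum>i\<in>F. c i *\<^sub>R u i)) powr p"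
    by (simp add: sum.insert[OF insert(1,2)])
  also have "\<dots> = norm (c x *\<^sub>R u x) powr p + norm (\<Sum>i\<in>F. c i *\<^sub>R u i) powr p"
    by (rule disj_add[OF p iso prod0])
  also have "\<dots> = \<bar>c x\<bar> powr p + (\<Sum>i\<in>F. \<bar>c i\<bar> powr p)" using C[of x] insert(3) by simp
  finally show ?case by (simp add: sum.insert[OF insert(1,2)])
qed

end


context
  fixes p :: real and M :: "'m measure" and T :: "'a::real_normed_vector \<Rightarrow> 'm \<Rightarrow> real"
  assumes p: "p \<ge> 1" and iso: "Lp_isometry p M T"
begin

lemma Tm4[measurable]: "T x \<in> borel_measurable M" by (rule T_meas[OF p iso])

lemma U1_from:
  fixes C :: "nat \<Rightarrow> 'm set" and u :: "nat \<Rightarrow> 'a"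
  assumes C: "\<And>n. C n \<in> sets M \<and> u n \<in> Vb M T (C n) \<and> norm (u n) = 1" and dj: "disjoint_family C"
  shows "(\<lambda>n. norm (w + s *\<^sub>R u n) powr p) \<longlonglongrightarrow> norm w powr p + \<bar>s\<bar> powr p"
proof -
  have p0: "p > 0" using p by simp
  have Cn[measurable]: "C n \<in> sets M" for n using C by blast
  have "\<forall>n. \<exists>z. AE \<omega> in M. T z \<omega> = indicator (C n) \<omega> * T w \<omega>"
    using band[OF p iso Cn] by blast
  from choice[OF this] obtain \<pi> where pi: "\<And>n. AE \<omega> in M. T (\<pi> n) \<omega> = indicator (C n) \<omega> * T w \<omega>" by blast
  have van: "AE \<omega> in M. \<omega> \<notin> C n \<longrightarrow> T (u n) \<omega> = 0" for n using C[of n] unfolding Vb_def by blast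
  have e1: "norm w powr p = norm (w - \<pi> n) powr p + norm (\<pi> n) powr p" for n
  proof -
    have "AE \<omega> in M. T (w - \<pi> n) \<omega> * T (\<pi> n) \<omega> = 0"
      using T_diff[OF p iso, of w "\<pi> n"] pi[of n] by eventually_elim (auto simp: indicator_def)
    then have "norm (w - \<pi> n + \<pi> n) powr p = norm (w - \<pi> n) powr p + norm (\<pi> n) powr p"
      by (rule disj_add[OF p iso])
    then show ?thesis by simp
  qed
  have e2: "norm (w + s *\<^sub>R u n) powr p = norm (w - \<pi> n) powr p + norm (\<pi> n + s *\<^sub>R u n) powr p" for n
  proof -
    have "AE \<omega> in M. T (w - \<pi> n) \<omega> * T (\<pi> n + s *\<^sub>R u n) \<omega> = 0"
      using T_diff[OF p iso, of w "\<pi> n"] pi[of n] T_add[OF p iso, of "\<pi> n" "s *\<^sub>R u n"]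
        T_scale[OF p iso, of s "u n"] van[of n]
      by eventually_elim (auto simp: indicator_def)
    then have "norm (w - \<pi> n + (\<pi> n + s *\<^sub>R u n)) powr p = norm (w - \<pi> n) powr p + norm (\<pi> n + s *\<^sub>R u n) powr p"
      by (rule disj_add[OF p iso])
    moreover have "w - \<pi> n + (\<pi> n + s *\<^sub>R u n) = w + s *\<^sub>R u n" by simp
    ultimately show ?thesis by simp
  qed
  have np: "norm (\<pi> n) powr p = (\<integral>\<omega>. \<bar>T w \<omega>\<bar> powr p * indicator (C n) \<omega> \<partial>M)" for n
  proof -
    have "norm (\<pi> n) powr p = (\<integral>\<omega>. \<bar>indicator (C n) \<omega> * T w \<omega>\<bar> powr p \<partial>M)"
      by (rule norm_cong[OF p iso pi]) measurable
    also have "\<dots> = (\<integral>\<omega>. \<bar>T w \<omega>\<bar> powr p * indicator (C n) \<omega> \<partial>M)"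
      by (rule Bochner_Integration.integral_cong) (auto simp: indicator_def p0)
    finally show ?thesis .
  qed
  have intn: "integrable M (\<lambda>\<omega>. \<bar>T w \<omega>\<bar> powr p * indicator (C n) \<omega>)" for n
    by (rule integrable_real_mult_indicator[OF Cn T_int[OF p iso]])
  have bound: "(\<Sum>n<N. norm (\<pi> n) powr p) \<le> norm w powr p" for N
  proof -
    have "(\<Sum>n<N. norm (\<pi> n) powr p) = (\<integral>\<omega>. (\<Sum>n<N. \<bar>T w \<omega>\<bar> powr p * indicator (C n) \<omega>) \<partial>M)"
      unfolding np by (rule Bochner_Integration.integral_sum[symmetric]) (rule intn)
    also have "\<dots> \<le> (\<integral>\<omega>. \<bar>T w \<omega>\<bar> powr p \<partial>M)"
    proof (rule integral_mono)
      show "integrable M (\<lambda>\<omega>. \<Sum>n<N. \<bar>T w \<omega>\<bar> powr p * indicator (C n) \<omega>)"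
        by (intro Bochner_Integration.integrable_sum intn)
      show "integrable M (\<lambda>\<omega>. \<bar>T w \<omega>\<bar> powr p)" by (rule T_int[OF p iso])
      fix \<omega>
      have dN: "disjoint_family_on C {..<N}" using dj unfolding disjoint_family_on_def by blast
      have "(\<Sum>n<N. indicator (C n) \<omega> :: real) = indicator (\<Union>(C ` {..<N})) \<omega>"
        by (rule indicator_UN_disjoint[symmetric]) (use dN in auto)
      also have "\<dots> \<le> 1" by (simp add: indicator_def)
      finally have "(\<Sum>n<N. indicator (C n) \<omega> :: real) \<le> 1" .
      then have "\<bar>T w \<omega>\<bar> powr p * (\<Sum>n<N. indicator (C n) \<omega>) \<le> \<bar>T w \<omega>\<bar> powr p * 1"
        by (intro mult_left_mono) auto
      then show "(\<Sum>n<N. \<bar>T w \<omega>\<bar> powr p * indicator (C n) \<omega>) \<le> \<bar>T w \<omega>\<bar> powr p"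
        by (simp add: sum_distrib_left)
    qed
    also have "\<dots> = norm w powr p" by (rule norm_int[OF p iso, symmetric])
    finally show ?thesis .
  qed
  have "summable (\<lambda>n. norm (\<pi> n) powr p)"
    by (rule summableI_nonneg_bounded[of _ "norm w powr p"]) (use bound in auto)
  then have l0: "(\<lambda>n. norm (\<pi> n) powr p) \<longlonglongrightarrow> 0" by (rule summable_LIMSEQ_zero)
  have l1: "(\<lambda>n. norm (\<pi> n)) \<longlonglongrightarrow> 0"
  proof -
    have "(\<lambda>n. (norm (\<pi> n) powr p) powr (1/p)) \<longlonglongrightarrow> 0 powr (1/p)"
      using p0 by (intro tendsto_powr' l0 tendsto_const) auto
    then show ?thesis using p0 by (simp add: powr_powr)
  qed
  have l2: "(\<lambda>n. norm (\<pi> n + s *\<^sub>R u n)) \<longlonglongrightarrow> \<bar>s\<bar>"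
  proof -
    have "(\<lambda>n. norm (\<pi> n + s *\<^sub>R u n) - \<bar>s\<bar>) \<longlonglongrightarrow> 0"
    proof (rule Lim_null_comparison[OF _ l1])
      show "eventually (\<lambda>n. norm (norm (\<pi> n + s *\<^sub>R u n) - \<bar>s\<bar>) \<le> norm (\<pi> n)) sequentially"
      proof (rule always_eventually, rule allI)
        fix n
        have "\<bar>norm (\<pi> n + s *\<^sub>R u n) - norm (s *\<^sub>R u n)\<bar> \<le> norm ((\<pi> n + s *\<^sub>R u n) - s *\<^sub>R u n)"
          by (rule norm_triangle_ineq3)
        then show "norm (norm (\<pi> n + s *\<^sub>R u n) - \<bar>s\<bar>) \<le> norm (\<pi> n)" using C[of n] by simp
      qed
    qed
    then have "(\<lambda>n. (norm (\<pi> n + s *\<^sub>R u n) - \<bar>s\<bar>) + \<bar>s\<bar>) \<longlonglongrightarrow> 0 + \<bar>s\<bar>"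
      by (intro tendsto_add tendsto_const)
    then show ?thesis by simp
  qed
  have l3: "(\<lambda>n. norm (\<pi> n + s *\<^sub>R u n) powr p) \<longlonglongrightarrow> \<bar>s\<bar> powr p"
    using p0 by (intro tendsto_powr' l2 tendsto_const) auto
  have "(\<lambda>n. norm w powr p - norm (\<pi> n) powr p + norm (\<pi> n + s *\<^sub>R u n) powr p) \<longlonglongrightarrow> norm w powr p - 0 + \<bar>s\<bar> powr p"
    by (intro tendsto_add tendsto_diff tendsto_const l0 l3)
  moreover have "norm (w + s *\<^sub>R u n) powr p = norm w powr p - norm (\<pi> n) powr p + norm (\<pi> n + s *\<^sub>R u n) powr p" for n
    using e1[of n] e2[of n] by simp
  ultimately show ?thesis by simp
qed

lemma Lp_seq:
  assumes inf: "\<not> (\<exists>S::'a set. finite S \<and> span S = UNIV)"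
  shows "\<exists>u::nat \<Rightarrow> 'a. (\<forall>F c. finite F \<longrightarrow> norm (\<Sum>i\<in>F. c i *\<^sub>R u i) powr p = (\<Sum>i\<in>F. \<bar>c i\<bar> powr p)) \<and>
     (\<forall>w s. (\<lambda>n. norm (w + s *\<^sub>R u n) powr p) \<longlonglongrightarrow> norm w powr p + \<bar>s\<bar> powr p)"
proof -
  have "infd M T (space M)"
    unfolding infd_def
  proof
    assume "\<exists>S. finite S \<and> Vb M T (space M) \<subseteq> span S"
    then obtain S where S: "finite S" "Vb M T (space M) \<subseteq> span S" by blast
    have "Vb M T (space M) = UNIV" unfolding Vb_def by (auto intro: AE_I2)
    then have "span S = UNIV" using S by auto
    then show False using inf S by blast
  qed
  then obtain C :: "nat \<Rightarrow> 'm set" and u :: "nat \<Rightarrow> 'a"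
    where C: "\<forall>n. C n \<in> sets M \<and> u n \<in> Vb M T (C n) \<and> norm (u n) = 1" and dj: "disjoint_family C"
    using disjoint_seq[OF p iso] by blast
  have C': "\<And>n. C n \<in> sets M \<and> u n \<in> Vb M T (C n) \<and> norm (u n) = 1" using C by blast
  show ?thesis
  proof (intro exI[of _ u] conjI allI impI)
    fix F :: "nat set" and c :: "nat \<Rightarrow> real" assume "finite F"
    then show "norm (\<Sum>i\<in>F. c i *\<^sub>R u i) powr p = (\<Sum>i\<in>F. \<bar>c i\<bar> powr p)"
      by (rule U0_from[OF p iso C' dj])
  next
    fix w s
    show "(\<lambda>n. norm (w + s *\<^sub>R u n) powr p) \<longlonglongrightarrow> norm w powr p + \<bar>s\<bar> powr p"
      by (rule U1_from[OF C' dj])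
  qed
qed

end


theorem corollary1p2:
  fixes p :: real and M :: "'m measure"
  assumes "p \<ge> 1"
    and "\<not> (\<exists>k::int. p = 2 * of_int k)"
    and "Lp_space_iso p M TYPE('a::banach)"
    and "\<not> (\<exists>S :: 'a set. finite S \<and> span S = UNIV)"
  shows "\<not> (\<exists>f :: 'a \<Rightarrow> real. bump_function f \<and> Tp_smooth p f)"
proof
  assume "\<exists>f :: 'a \<Rightarrow> real. bump_function f \<and> Tp_smooth p f"
  then obtain f :: "'a \<Rightarrow> real" where bump: "bump_function f" and Tp: "Tp_smooth p f" by blast
  obtain T :: "'a \<Rightarrow> 'm \<Rightarrow> real" where iso: "Lp_isometry p M T"
    using assms(3) unfolding Lp_space_iso_def by blast
  obtain u :: "nat \<Rightarrow> 'a" where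
    U0: "\<forall>F c. finite F \<longrightarrow> norm (\<Sum>i\<in>F. c i *\<^sub>R u i) powr p = (\<Sum>i\<in>F. \<bar>c i\<bar> powr p)" and
    U1: "\<forall>w s. (\<lambda>n. norm (w + s *\<^sub>R u n) powr p) \<longlonglongrightarrow> norm w powr p + \<bar>s\<bar> powr p"
    using Lp_seq[OF assms(1) iso assms(4)] by blast
  show False
    by (rule no_bump_abs[OF assms(1) assms(2) _ _ Tp bump]) (use U0 U1 in auto)
qed

end
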